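(* Let $\mathcal H=\mathbb R^p$ (a $p$-dimensional Hilbert space with inner product $\langle\cdot,\cdot\rangle$ and norm $\|\cdot\|$), let $(Z,\rho)$ be a probability space, and let $z_0,z_1,z_2,\dots$ be i.i.d. samples from $\rho$; write $S_n=(z_0,\dots,z_{n-1})$. Let $V:\mathcal H\times Z\to\mathbb R_+$ be a loss such that $V(\cdot,z)$ is convex and twice differentiable for every $z\in Z$, such that $I(f)=\mathbb E_{z}V(f,z)$ exists and is finite for all $f\in\mathcal H$, and such that the Hessian $H(V(f,z))$ of $V(\cdot,z)$ at $f$ satisfies $\langle g, H(V(f,z))\, g\rangle\ge 0$ and $\|H(V(f,z))\|\le M<\infty$ for all $f,g\in\mathcal H$, $z\in Z$. Let $K\subseteq\mathcal H$ be closed and convex. Consider stochastic gradient descent $f_0=0$, $f_{n+1}=f_n-\gamma_n\nabla V(f_n,z_n)$, where $\gamma_n>0$. Assume: (i) there exists $f_K\in K$ with $\nabla I(f_K)=0$ and $\langle f-f_K,\nabla I(f)\rangle>0$ for all $f\in\mathcal H$ with $f\neq f_K$; (ii) $\sum_n\gamma_n=\infty$ and $\sum_n\gamma_n^2<\infty$; (iii) there exist $C,N>0$ such that for all $n>N$, $$0<\mathbb E_{z_n}\big[V(f_n,z_n)-V(f_{n+1},z_n)\,\big|\,S_n\big]\le C\gamma_n .$$ Then $\mathbb P\big(\lim_{n\to\infty}\|f_n-f_K\|=0\big)=1$.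
   Context: $\nabla V(f,z)$ denotes the gradient of $V(\cdot,z)$ at $f$. The conditional expectation $\mathbb E_{z_n}[\,\cdot\,|S_n]$ is the expectation over $z_n$ with $z_0,\dots,z_{n-1}$ (hence $f_n$) held fixed. Condition (iii) is the $\mathrm{CV}_{on}$ stability of the algorithm with rate $\beta_n=C\gamma_n$. In this section the paper considers the case where the projection onto $K$ in projected SGD $f_{n+1}=\Pi_K(f_n-\gamma_n\nabla V(f_n,z_n))$ can be dropped, giving the unprojected update above. *)

theory Defs
  imports "HOL-Analysis.Analysis" "HOL-Probability.Probability"
begin

text \<open>Unprojected SGD iterates along a sample sequence zs:
  f_0 = 0, f_(n+1) = f_n - gamma_n * gradV(f_n, z_n).
  Note that sgd gamma gradV zs n depends only on zs 0, ..., zs (n-1), i.e. on S_n.\<close>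
primrec sgd :: "(nat \<Rightarrow> real) \<Rightarrow> ('a::real_vector \<Rightarrow> 'z \<Rightarrow> 'a) \<Rightarrow> (nat \<Rightarrow> 'z) \<Rightarrow> nat \<Rightarrow> 'a"
where
  "sgd \<gamma> gV zs 0 = 0"
| "sgd \<gamma> gV zs (Suc n) = sgd \<gamma> gV zs n - \<gamma> n *\<^sub>R gV (sgd \<gamma> gV zs n) (zs n)"

definition risk :: "'z measure \<Rightarrow> ('a \<Rightarrow> 'z \<Rightarrow> real) \<Rightarrow> 'a \<Rightarrow> real" where
  "risk \<rho> V f = (\<integral>z. V f z \<partial>\<rho>)"

end

theory Submission
  imports Defs
begin


locale sgdset =
  fixes \<rho> :: "'z measure" and M :: "'w measure"
    and X :: "nat \<Rightarrow> 'w \<Rightarrow> 'z"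
    and V :: "'a::euclidean_space \<Rightarrow> 'z \<Rightarrow> real"
    and gradV :: "'a \<Rightarrow> 'z \<Rightarrow> 'a"
    and HV :: "'a \<Rightarrow> 'z \<Rightarrow> 'a \<Rightarrow> 'a"
    and Mb :: real and K :: "'a set" and fK :: 'a
    and \<gamma> :: "nat \<Rightarrow> real" and C :: real and N :: nat
  assumes rho: "prob_space \<rho>"
    and M: "prob_space M"
    and X_meas: "\<And>i. X i \<in> measurable M \<rho>"
    and X_distr: "\<And>i. distr M \<rho> (X i) = \<rho>"
    and X_indep: "prob_space.indep_vars M (\<lambda>_. \<rho>) X UNIV"
    and V_nonneg: "\<And>f z. z \<in> space \<rho> \<Longrightarrow> V f z \<ge> 0"
    and V_grad: "\<And>f z. z \<in> space \<rho> \<Longrightarrow>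
                   ((\<lambda>g. V g z) has_derivative (\<lambda>h. gradV f z \<bullet> h)) (at f)"
    and V_hess: "\<And>f z. z \<in> space \<rho> \<Longrightarrow>
                   ((\<lambda>g. gradV g z) has_derivative HV f z) (at f)"
    and I_finite: "\<And>f. integrable \<rho> (\<lambda>z. V f z)"
    and H_psd: "\<And>f g z. z \<in> space \<rho> \<Longrightarrow> g \<bullet> HV f z g \<ge> 0"
    and H_bound: "\<And>f z. z \<in> space \<rho> \<Longrightarrow> onorm (HV f z) \<le> Mb"
    and fK_crit: "(risk \<rho> V has_derivative (\<lambda>h. 0 \<bullet> h)) (at fK)"
    and fK_unique: "\<And>f. f \<noteq> fK \<Longrightarrow>
          \<exists>g. (risk \<rho> V has_derivative (\<lambda>h. g \<bullet> h)) (at f) \<and> (f - fK) \<bullet> g > 0"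
    and \<gamma>_pos: "\<And>n. \<gamma> n > 0"
    and \<gamma>_sum: "\<not> summable \<gamma>"
    and \<gamma>_sq: "summable (\<lambda>n. (\<gamma> n)\<^sup>2)"
    and C_pos: "C > 0"
    and stab: "\<And>n zs. n > N \<Longrightarrow> (\<forall>i. zs i \<in> space \<rho>) \<Longrightarrow>
          0 < (\<integral>z. V (sgd \<gamma> gradV zs n) z - V (sgd \<gamma> gradV zs n - \<gamma> n *\<^sub>R gradV (sgd \<gamma> gradV zs n) z) z \<partial>\<rho>)
          \<and> (\<integral>z. V (sgd \<gamma> gradV zs n) z - V (sgd \<gamma> gradV zs n - \<gamma> n *\<^sub>R gradV (sgd \<gamma> gradV zs n) z) z \<partial>\<rho>) \<le> C * \<gamma> n"
begin

sublocale R: prob_space \<rho> by (rule rho)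
sublocale P: prob_space M by (rule M)

end

context sgdset begin

lemma Mb_nonneg: "Mb \<ge> 0"
proof -
  obtain z where "z \<in> space \<rho>" using R.not_empty by blast
  thus ?thesis using H_bound[of z 0] onorm_pos_le[of "HV 0 z"] V_hess[of z 0]
    by (meson has_derivative_bounded_linear order_trans)
qed

lemma phi_deriv:
  assumes z: "z \<in> space \<rho>"
  shows "((\<lambda>t. V (f + t *\<^sub>R h) z) has_real_derivative (gradV (f + t *\<^sub>R h) z \<bullet> h)) (at t)"
proof -
  have "((\<lambda>t. f + t *\<^sub>R h) has_derivative (\<lambda>s. s *\<^sub>R h)) (at t)"
    by (auto intro!: derivative_eq_intros)
  from has_derivative_compose[OF this V_grad[OF z, of "f + t *\<^sub>R h"]]
  have "((\<lambda>t. V (f + t *\<^sub>R h) z) has_derivative (\<lambda>s. gradV (f + t *\<^sub>R h) z \<bullet> (s *\<^sub>R h))) (at t)" .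
  thus ?thesis unfolding has_field_derivative_def
    by (rule has_derivative_eq_rhs) (auto simp: fun_eq_iff)
qed

lemma psi_deriv:
  assumes z: "z \<in> space \<rho>"
  shows "((\<lambda>t. gradV (f + t *\<^sub>R h) z \<bullet> h) has_real_derivative (HV (f + t *\<^sub>R h) z h \<bullet> h)) (at t)"
proof -
  have "((\<lambda>t. f + t *\<^sub>R h) has_derivative (\<lambda>s. s *\<^sub>R h)) (at t)"
    by (auto intro!: derivative_eq_intros)
  from has_derivative_compose[OF this V_hess[OF z, of "f + t *\<^sub>R h"]]
  have d: "((\<lambda>t. gradV (f + t *\<^sub>R h) z) has_derivative (\<lambda>s. HV (f + t *\<^sub>R h) z (s *\<^sub>R h))) (at t)" .
  have lin: "linear (HV (f + t *\<^sub>R h) z)"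
    using V_hess[OF z] has_derivative_linear by blast
  have "((\<lambda>t. gradV (f + t *\<^sub>R h) z \<bullet> h) has_derivative (\<lambda>s. HV (f + t *\<^sub>R h) z (s *\<^sub>R h) \<bullet> h)) (at t)"
    using has_derivative_inner_left[OF d] .
  thus ?thesis unfolding has_field_derivative_def
    by (rule has_derivative_eq_rhs) (auto simp: fun_eq_iff linear_scale[OF lin])
qed

lemma HV_le:
  assumes z: "z \<in> space \<rho>"
  shows "HV x z h \<bullet> h \<le> Mb * (norm h)\<^sup>2"
proof -
  have bl: "bounded_linear (HV x z)" using V_hess[OF z] has_derivative_bounded_linear by blast
  have "HV x z h \<bullet> h \<le> norm (HV x z h) * norm h" by (rule norm_cauchy_schwarz)
  also have "\<dots> \<le> (onorm (HV x z) * norm h) * norm h"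
    by (intro mult_right_mono onorm[OF bl]) auto
  also have "\<dots> \<le> (Mb * norm h) * norm h"
    by (intro mult_right_mono H_bound[OF z]) auto
  finally show ?thesis by (simp add: power2_eq_square)
qed

lemma HV_ge: "z \<in> space \<rho> \<Longrightarrow> HV x z h \<bullet> h \<ge> 0"
  using H_psd[of z x h] H_psd[of z x h] by (metis H_psd inner_commute)

lemma psi_bounds:
  assumes z: "z \<in> space \<rho>" and t: "0 \<le> t"
  shows "gradV f z \<bullet> h \<le> gradV (f + t *\<^sub>R h) z \<bullet> h
     \<and> gradV (f + t *\<^sub>R h) z \<bullet> h \<le> gradV f z \<bullet> h + t * (Mb * (norm h)\<^sup>2)"
proof (cases "t = 0")
  case True then show ?thesis by simp
next
  case False
  with t have t: "0 < t" by simp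
  from MVT2[OF t, of "\<lambda>t. gradV (f + t *\<^sub>R h) z \<bullet> h" "\<lambda>t. HV (f + t *\<^sub>R h) z h \<bullet> h"] psi_deriv[OF z]
  obtain s where s: "gradV (f + t *\<^sub>R h) z \<bullet> h - gradV (f + 0 *\<^sub>R h) z \<bullet> h = (t - 0) * (HV (f + s *\<^sub>R h) z h \<bullet> h)"
    by blast
  have "0 \<le> t * (HV (f + s *\<^sub>R h) z h \<bullet> h)" using HV_ge[OF z] t by simp
  moreover have "t * (HV (f + s *\<^sub>R h) z h \<bullet> h) \<le> t * (Mb * (norm h)\<^sup>2)"
    using HV_le[OF z] t by (intro mult_left_mono) auto
  ultimately show ?thesis using s by simp
qed

lemma taylor:
  assumes z: "z \<in> space \<rho>"
  shows "gradV f z \<bullet> h \<le> V (f + h) z - V f z \<and> V (f + h) z - V f z \<le> gradV f z \<bullet> h + Mb * (norm h)\<^sup>2"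
proof -
  from MVT2[of 0 1 "\<lambda>t. V (f + t *\<^sub>R h) z" "\<lambda>t. gradV (f + t *\<^sub>R h) z \<bullet> h"] phi_deriv[OF z]
  obtain s where s: "0 < s" "s < 1" "V (f + 1 *\<^sub>R h) z - V (f + 0 *\<^sub>R h) z = (1 - 0) * (gradV (f + s *\<^sub>R h) z \<bullet> h)"
    by force
  have "s * (Mb * (norm h)\<^sup>2) \<le> 1 * (Mb * (norm h)\<^sup>2)"
    using s Mb_nonneg by (intro mult_right_mono) auto
  with psi_bounds[OF z, of s f h] s show ?thesis by simp
qed

lemma grad_mono:
  assumes z: "z \<in> space \<rho>"
  shows "(gradV g z - gradV f z) \<bullet> (g - f) \<ge> 0"
  using psi_bounds[OF z, of 1 f "g - f"] by (simp add: inner_diff_left)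

lemma grad_lip:
  assumes z: "z \<in> space \<rho>"
  shows "norm (gradV f z - gradV g z) \<le> Mb * norm (f - g)"
  by (rule differentiable_bound[of UNIV "\<lambda>x. gradV x z" "\<lambda>x. HV x z"])
     (use V_hess[OF z] H_bound[OF z] in auto)

end


definition rnd :: "nat \<Rightarrow> 'a::euclidean_space \<Rightarrow> 'a" where
  "rnd k f = (\<Sum>b\<in>Basis. (real_of_int \<lfloor>2^k * (f \<bullet> b)\<rfloor> / 2^k) *\<^sub>R b)"

lemma rnd_meas: "rnd k \<in> borel_measurable borel"
  unfolding rnd_def by measurable

lemma rnd_close: "norm (rnd k f - f) \<le> real DIM('a) / 2^k" for f :: "'a::euclidean_space"
proof -
  have "rnd k f - f = (\<Sum>b\<in>Basis. (real_of_int \<lfloor>2^k * (f \<bullet> b)\<rfloor> / 2^k - f \<bullet> b) *\<^sub>R b)"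
    unfolding rnd_def
    by (subst (3) euclidean_representation[symmetric]) (simp add: sum_subtractf scaleR_diff_left)
  also have "norm \<dots> \<le> (\<Sum>b\<in>(Basis::'a set). norm ((real_of_int \<lfloor>2^k * (f \<bullet> b)\<rfloor> / 2^k - f \<bullet> b) *\<^sub>R b))"
    by (rule norm_sum)
  also have "\<dots> \<le> (\<Sum>b\<in>(Basis::'a set). 1 / 2^k)"
  proof (rule sum_mono)
    fix b :: 'a assume b: "b \<in> Basis"
    have a: "\<bar>real_of_int \<lfloor>2^k * (f \<bullet> b)\<rfloor> - 2^k * (f \<bullet> b)\<bar> \<le> 1" by linarith
    have e: "real_of_int \<lfloor>2^k * (f \<bullet> b)\<rfloor> / 2^k - f \<bullet> b = (real_of_int \<lfloor>2^k * (f \<bullet> b)\<rfloor> - 2^k * (f \<bullet> b)) / 2^k"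
      by (simp add: diff_divide_distrib)
    have "\<bar>real_of_int \<lfloor>2^k * (f \<bullet> b)\<rfloor> / 2^k - f \<bullet> b\<bar> = \<bar>real_of_int \<lfloor>2^k * (f \<bullet> b)\<rfloor> - 2^k * (f \<bullet> b)\<bar> / 2^k" unfolding e by (simp add: abs_divide)
    also have "\<dots> \<le> 1 / 2^k" using a by (intro divide_right_mono) auto
    finally have "\<bar>real_of_int \<lfloor>2^k * (f \<bullet> b)\<rfloor> / 2^k - f \<bullet> b\<bar> \<le> 1 / 2^k" .
    thus "norm ((real_of_int \<lfloor>2^k * (f \<bullet> b)\<rfloor> / 2^k - f \<bullet> b) *\<^sub>R b) \<le> 1 / 2^k"
      using b by simp
  qed
  also have "\<dots> = real DIM('a) / 2^k" by simp
  finally show ?thesis .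
qed

lemma rnd_tendsto: "(\<lambda>k. rnd k f) \<longlonglongrightarrow> f"
proof -
  have "(\<lambda>k. real DIM('a) / 2^k) \<longlonglongrightarrow> 0"
    by (intro tendsto_divide_0[OF tendsto_const]) (simp add: filterlim_realpow_sequentially_gt1)
  hence "(\<lambda>k. norm (rnd k f - f)) \<longlonglongrightarrow> 0"
    by (rule Lim_null_comparison[rotated]) (auto intro: always_eventually rnd_close)
  thus ?thesis by (simp add: tendsto_norm_zero_iff LIM_zero_iff)
qed

lemma rnd_countable: "countable (range (rnd k :: 'a::euclidean_space \<Rightarrow> 'a))"
proof -
  have "range (rnd k :: 'a \<Rightarrow> 'a) \<subseteq> (\<lambda>c. \<Sum>b\<in>Basis. (real_of_int (c b) / 2^k) *\<^sub>R b) ` (Pi\<^sub>E Basis (\<lambda>_. UNIV))"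
  proof
    fix y assume "y \<in> range (rnd k :: 'a \<Rightarrow> 'a)"
    then obtain f where y: "y = rnd k f" by auto
    show "y \<in> (\<lambda>c. \<Sum>b\<in>Basis. (real_of_int (c b) / 2^k) *\<^sub>R b) ` (Pi\<^sub>E Basis (\<lambda>_. UNIV))"
      unfolding y rnd_def
      by (rule image_eqI[of _ _ "restrict (\<lambda>b. \<lfloor>2^k * (f \<bullet> b)\<rfloor>) Basis"]) auto
  qed
  moreover have "countable (Pi\<^sub>E (Basis::'a set) (\<lambda>_. UNIV :: int set))"
    by (intro countable_PiE) auto
  ultimately show ?thesis by (meson countable_image countable_subset)
qed

lemma rnd_meas_count: "(\<lambda>x. rnd k (F x)) \<in> measurable N (count_space (range (rnd k)))"
  if F: "F \<in> borel_measurable N" for F :: "_ \<Rightarrow> 'a::euclidean_space"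
proof (subst measurable_count_space_eq_countable[OF rnd_countable], safe)
  fix a :: 'a
  have "(\<lambda>x. rnd k (F x)) \<in> borel_measurable N" using measurable_comp[OF F rnd_meas] by (simp add: comp_def)
  thus "(\<lambda>x. rnd k (F x)) -` {a} \<inter> space N \<in> sets N"
    by (rule measurable_sets) simp
qed auto

context sgdset begin

lemma V_meas: "(\<lambda>z. V f z) \<in> borel_measurable \<rho>"
  using I_finite by (rule borel_measurable_integrable)

lemma seq_at0: "filterlim (\<lambda>m. 1 / real (Suc m)) (at (0::real)) sequentially"
proof -
  have "filterlim (\<lambda>m. 1 / real (Suc m)) (at_right (0::real)) sequentially"
    by (rule tendsto_imp_filterlim_at_right[OF LIMSEQ_Suc[OF lim_1_over_n]]) auto
  from filterlim_mono[OF this at_le[OF subset_UNIV] order_refl] show ?thesis by simp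
qed

lemma grad_comp_meas: "(\<lambda>z. gradV f z \<bullet> b) \<in> borel_measurable \<rho>"
proof (rule borel_measurable_LIMSEQ_real)
  show "(\<lambda>m. (V (f + (1 / real (Suc m)) *\<^sub>R b) z - V f z) / (1 / real (Suc m))) \<longlonglongrightarrow> gradV f z \<bullet> b"
    if z: "z \<in> space \<rho>" for z
  proof -
    have "((\<lambda>h. (V (f + (0 + h) *\<^sub>R b) z - V (f + 0 *\<^sub>R b) z) / h) \<longlongrightarrow> gradV (f + 0 *\<^sub>R b) z \<bullet> b) (at 0)"
      using phi_deriv[OF z, of f b 0] unfolding DERIV_def .
    from filterlim_compose[OF this seq_at0] show ?thesis by simp
  qed
  show "(\<lambda>z. (V (f + (1 / real (Suc m)) *\<^sub>R b) z - V f z) / (1 / real (Suc m))) \<in> borel_measurable \<rho>" for m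
    by (intro borel_measurable_divide borel_measurable_diff V_meas borel_measurable_const)
qed

lemma grad_meas: "(\<lambda>z. gradV f z) \<in> borel_measurable \<rho>"
  by (rule borel_measurable_euclidean_space[THEN iffD2]) (auto intro: grad_comp_meas)

lemma grad_joint: "(\<lambda>p. gradV (fst p) (snd p)) \<in> borel_measurable (borel \<Otimes>\<^sub>M \<rho>)"
proof (rule borel_measurable_LIMSEQ_metric)
  show "(\<lambda>p. gradV (rnd k (fst p)) (snd p)) \<in> borel_measurable (borel \<Otimes>\<^sub>M \<rho>)" for k
  proof (rule measurable_compose_countable'[where f="\<lambda>i p. gradV i (snd p)" and g="\<lambda>p. rnd k (fst p)", OF _ _ rnd_countable[of k]])
    show "(\<lambda>p. gradV i (snd p)) \<in> borel_measurable (borel \<Otimes>\<^sub>M \<rho>)" for i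
      using measurable_comp[OF measurable_snd grad_meas] by (simp add: comp_def)
    show "(\<lambda>p. rnd k (fst p)) \<in> measurable (borel \<Otimes>\<^sub>M \<rho>) (count_space (range (rnd k)))"
      by (rule rnd_meas_count[OF measurable_fst[of borel \<rho>], simplified])
  qed
  show "(\<lambda>k. gradV (rnd k (fst p)) (snd p)) \<longlonglongrightarrow> gradV (fst p) (snd p)" if p: "p \<in> space (borel \<Otimes>\<^sub>M \<rho>)" for p
  proof -
    have z: "snd p \<in> space \<rho>" using p by (auto simp: space_pair_measure)
    have "(\<lambda>k. Mb * norm (rnd k (fst p) - fst p)) \<longlonglongrightarrow> 0"
      by (intro tendsto_mult_right_zero tendsto_norm_zero LIM_zero rnd_tendsto)
    hence "(\<lambda>k. norm (gradV (rnd k (fst p)) (snd p) - gradV (fst p) (snd p))) \<longlonglongrightarrow> 0"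
      by (rule Lim_null_comparison[rotated]) (auto intro: always_eventually grad_lip[OF z])
    thus ?thesis by (simp add: tendsto_norm_zero_iff LIM_zero_iff)
  qed
qed

lemma grad_comp:
  assumes "F \<in> borel_measurable Q" "Z \<in> measurable Q \<rho>"
  shows "(\<lambda>x. gradV (F x) (Z x)) \<in> borel_measurable Q"
  using measurable_comp[OF measurable_Pair[OF assms] grad_joint] by (simp add: comp_def)

end


lemma sgd_cong: "(\<And>i. i < n \<Longrightarrow> zs i = zs' i) \<Longrightarrow> sgd \<gamma> gV zs n = sgd \<gamma> gV zs' n"
  by (induction n) auto

lemma quad_deriv:
  fixes F :: "'a::real_normed_vector \<Rightarrow> real"
  assumes L: "bounded_linear L" and b: "\<And>h. \<bar>F (x + h) - F x - L h\<bar> \<le> c * (norm h)\<^sup>2"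
  shows "(F has_derivative L) (at x)"
  unfolding has_derivative_at
proof (intro conjI L)
  have lim: "((\<lambda>h. c * norm h) \<longlongrightarrow> 0) (at (0::'a))"
    by (intro tendsto_mult_right_zero tendsto_norm_zero tendsto_ident_at)
  have bnd: "norm (norm (F (x + h) - F x - L h) / norm h) \<le> c * norm h" for h
  proof (cases "h = 0")
    case True then show ?thesis using b[of 0] by simp
  next
    case False
    hence "norm (norm (F (x + h) - F x - L h) / norm h) = \<bar>F (x + h) - F x - L h\<bar> / norm h" by simp
    also have "\<dots> \<le> c * (norm h)\<^sup>2 / norm h" using b[of h] False by (intro divide_right_mono) auto
    also have "\<dots> = c * norm h" using False by (simp add: power2_eq_square)
    finally show ?thesis .
  qed
  show "((\<lambda>h. norm (F (x + h) - F x - L h) / norm h) \<longlongrightarrow> 0) (at 0)"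
    by (rule Lim_null_comparison[OF always_eventually[OF allI[OF bnd]] lim])
qed

context sgdset begin

lemma sgd_meas:
  "(\<And>i. i < n \<Longrightarrow> Y i \<in> measurable Q \<rho>) \<Longrightarrow> (\<lambda>x. sgd \<gamma> gradV (\<lambda>i. Y i x) n) \<in> borel_measurable Q"
proof (induction n)
  case 0 then show ?case by simp
next
  case (Suc n)
  have IH: "(\<lambda>x. sgd \<gamma> gradV (\<lambda>i. Y i x) n) \<in> borel_measurable Q" using Suc by auto
  have "(\<lambda>x. gradV (sgd \<gamma> gradV (\<lambda>i. Y i x) n) (Y n x)) \<in> borel_measurable Q"
    by (rule grad_comp[OF IH]) (use Suc in auto)
  then show ?case using IH by simp
qed

definition G :: "'a \<Rightarrow> 'a" where "G f = (\<integral>z. gradV f z \<partial>\<rho>)"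

lemma grad_comp_bound:
  assumes z: "z \<in> space \<rho>" and b: "b \<in> Basis"
  shows "\<bar>gradV f z \<bullet> b\<bar> \<le> V (f + b) z + V (f - b) z + 2 * V f z"
proof -
  have "gradV f z \<bullet> b \<le> V (f + b) z - V f z" using taylor[OF z, of f b] by simp
  moreover have "gradV f z \<bullet> (- b) \<le> V (f + - b) z - V f z" using taylor[OF z, of f "-b"] by simp
  ultimately show ?thesis using V_nonneg[OF z, of "f+b"] V_nonneg[OF z, of "f-b"] V_nonneg[OF z, of f]
    by (simp add: inner_minus_right)
qed

lemma grad_int: "integrable \<rho> (\<lambda>z. gradV f z)"
proof (rule Bochner_Integration.integrable_bound)
  show "integrable \<rho> (\<lambda>z. \<Sum>b\<in>Basis. V (f + b) z + V (f - b) z + 2 * V f z)"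
  proof (rule Bochner_Integration.integrable_sum)
    fix b :: 'a
    show "integrable \<rho> (\<lambda>z. V (f + b) z + V (f - b) z + 2 * V f z)"
      by (intro Bochner_Integration.integrable_add Bochner_Integration.integrable_mult_right I_finite)
  qed
  show "(\<lambda>z. gradV f z) \<in> borel_measurable \<rho>" by (rule grad_meas)
  show "AE z in \<rho>. norm (gradV f z) \<le> norm (\<Sum>b\<in>Basis. V (f + b) z + V (f - b) z + 2 * V f z)"
  proof (rule AE_I2)
    fix z assume z: "z \<in> space \<rho>"
    have "norm (gradV f z) \<le> (\<Sum>b\<in>Basis. \<bar>gradV f z \<bullet> b\<bar>)" by (rule norm_le_l1)
    also have "\<dots> \<le> (\<Sum>b\<in>Basis. V (f + b) z + V (f - b) z + 2 * V f z)"
      by (intro sum_mono grad_comp_bound[OF z])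
    also have "\<dots> \<le> norm (\<Sum>b\<in>Basis. V (f + b) z + V (f - b) z + 2 * V f z)" by simp
    finally show "norm (gradV f z) \<le> norm (\<Sum>b\<in>Basis. V (f + b) z + V (f - b) z + 2 * V f z)" .
  qed
qed

lemma risk_deriv: "(risk \<rho> V has_derivative (\<lambda>h. G f \<bullet> h)) (at f)"
proof (rule quad_deriv)
  show "bounded_linear (\<lambda>h. G f \<bullet> h)" by (rule bounded_linear_inner_right)
  fix h
  have "risk \<rho> V (f + h) - risk \<rho> V f - G f \<bullet> h = (\<integral>z. V (f + h) z - V f z - gradV f z \<bullet> h \<partial>\<rho>)"
    unfolding risk_def G_def using grad_int[of f]
    by (simp add: integral_diff I_finite integral_inner_left)
  moreover have "\<bar>\<integral>z. V (f + h) z - V f z - gradV f z \<bullet> h \<partial>\<rho>\<bar> \<le> Mb * (norm h)\<^sup>2"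
  proof -
    have "(\<integral>z. V (f + h) z - V f z - gradV f z \<bullet> h \<partial>\<rho>) \<le> (\<integral>z. Mb * (norm h)\<^sup>2 \<partial>\<rho>)"
      using grad_int[of f]
      by (intro integral_mono_AE) (auto intro!: AE_I2 integrable_diff I_finite dest: taylor[of _ f h])
    moreover have "0 \<le> (\<integral>z. V (f + h) z - V f z - gradV f z \<bullet> h \<partial>\<rho>)"
      using taylor[of _ f h] by (intro integral_nonneg_AE AE_I2) auto
    ultimately show ?thesis by (simp add: R.prob_space)
  qed
  ultimately show "\<bar>risk \<rho> V (f + h) - risk \<rho> V f - G f \<bullet> h\<bar> \<le> Mb * (norm h)\<^sup>2" by simp
qed

lemma G_fK: "G fK = 0"
proof -
  have "(\<lambda>h. 0 \<bullet> h) = (\<lambda>h. G fK \<bullet> h)"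
    by (rule has_derivative_unique[OF fK_crit risk_deriv])
  hence "0 \<bullet> G fK = G fK \<bullet> G fK" by (rule fun_cong)
  thus ?thesis by simp
qed

lemma G_pos: "f \<noteq> fK \<Longrightarrow> (f - fK) \<bullet> G f > 0"
proof -
  assume "f \<noteq> fK"
  then obtain g where g: "(risk \<rho> V has_derivative (\<lambda>h. g \<bullet> h)) (at f)" "(f - fK) \<bullet> g > 0"
    using fK_unique by blast
  have "(\<lambda>h. g \<bullet> h) = (\<lambda>h. G f \<bullet> h)" by (rule has_derivative_unique[OF g(1) risk_deriv])
  hence "\<forall>h. g \<bullet> h = G f \<bullet> h" by (simp add: fun_eq_iff)
  hence "g = G f" by (simp only: vector_eq_rdot)
  with g show ?thesis by simp
qed

lemma G_diff: "G f - G g = (\<integral>z. gradV f z - gradV g z \<partial>\<rho>)"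
  unfolding G_def by (simp add: integral_diff grad_int)

lemma G_lip: "norm (G f - G g) \<le> Mb * norm (f - g)"
proof -
  have "norm (G f - G g) \<le> (\<integral>z. norm (gradV f z - gradV g z) \<partial>\<rho>)"
    unfolding G_diff by (rule integral_norm_bound)
  also have "\<dots> \<le> (\<integral>z. Mb * norm (f - g) \<partial>\<rho>)"
    using grad_lip[of _ f g] by (intro integral_mono_AE) (auto intro!: AE_I2 grad_int)
  finally show ?thesis by (simp add: R.prob_space)
qed

lemma G_cont: "continuous_on S G"
proof (rule continuous_onI)
  fix x e assume e: "(0::real) < e"
  show "\<exists>d>0. \<forall>x'\<in>S. dist x' x < d \<longrightarrow> dist (G x') (G x) \<le> e"
  proof (intro exI[of _ "e / (Mb + 1)"] conjI ballI impI)
    show "0 < e / (Mb + 1)" using e Mb_nonneg by simp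
    fix y assume "dist y x < e / (Mb + 1)"
    hence "(Mb + 1) * norm (y - x) \<le> e" using Mb_nonneg by (simp add: dist_norm field_simps)
    moreover have "Mb * norm (y - x) \<le> (Mb + 1) * norm (y - x)" by (simp add: distrib_right)
    ultimately show "dist (G y) (G x) \<le> e" using G_lip[of y x] by (simp add: dist_norm)
  qed
qed

lemma G_mono: "(G g - G f) \<bullet> (g - f) \<ge> 0"
proof -
  have "(G g - G f) \<bullet> (g - f) = (\<integral>z. (gradV g z - gradV f z) \<bullet> (g - f) \<partial>\<rho>)"
    unfolding G_diff by (simp add: grad_int)
  also have "\<dots> \<ge> 0" using grad_mono by (intro integral_nonneg_AE AE_I2) auto
  finally show ?thesis .
qed

end

context sgdset begin

lemma gamma_lim: "\<gamma> \<longlonglongrightarrow> 0"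
proof -
  have "(\<lambda>n. (\<gamma> n)\<^sup>2) \<longlonglongrightarrow> 0" by (rule summable_LIMSEQ_zero[OF \<gamma>_sq])
  hence "(\<lambda>n. sqrt ((\<gamma> n)\<^sup>2)) \<longlonglongrightarrow> sqrt 0" by (rule tendsto_real_sqrt)
  moreover have "sqrt ((\<gamma> n)\<^sup>2) = \<gamma> n" for n using \<gamma>_pos[of n] by simp
  ultimately show ?thesis by simp
qed

lemma exists_n1: "\<exists>n1>N. \<forall>n\<ge>n1. Mb * \<gamma> n \<le> 1/2"
proof -
  have "eventually (\<lambda>n. \<gamma> n < 1 / (2 * (Mb + 1))) sequentially"
    using gamma_lim Mb_nonneg by (intro order_tendstoD) auto
  then obtain n0 where n0: "\<And>n. n \<ge> n0 \<Longrightarrow> \<gamma> n < 1 / (2 * (Mb + 1))"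
    by (auto simp: eventually_sequentially)
  show ?thesis
  proof (intro exI[of _ "max n0 (Suc N)"] conjI allI impI)
    fix n assume "max n0 (Suc N) \<le> n"
    hence g: "\<gamma> n < 1 / (2 * (Mb + 1))" using n0 by auto
    have "Mb * \<gamma> n \<le> (Mb + 1) * \<gamma> n" using \<gamma>_pos[of n] by (simp add: distrib_right)
    also have "\<dots> \<le> (Mb + 1) * (1 / (2 * (Mb + 1)))"
      using g Mb_nonneg by (intro mult_left_mono) auto
    also have "\<dots> = 1/2" using Mb_nonneg by simp
    finally show "Mb * \<gamma> n \<le> 1/2" .
  qed simp
qed

lemma moment_bound:
  assumes n: "n > N" "Mb * \<gamma> n \<le> 1/2" and zs: "\<forall>i. zs i \<in> space \<rho>"
  defines "f \<equiv> sgd \<gamma> gradV zs n"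
  shows "integrable \<rho> (\<lambda>z. (norm (gradV f z))\<^sup>2) \<and> (\<integral>z. (norm (gradV f z))\<^sup>2 \<partial>\<rho>) \<le> 2 * C"
proof -
  define D where "D z = V f z - V (f - \<gamma> n *\<^sub>R gradV f z) z" for z
  have st: "0 < integral\<^sup>L \<rho> D" "integral\<^sup>L \<rho> D \<le> C * \<gamma> n"
    using stab[OF n(1) zs] unfolding D_def f_def by auto
  have Dint: "integrable \<rho> D"
    using st(1) not_integrable_integral_eq by fastforce
  have gp: "\<gamma> n > 0" by (rule \<gamma>_pos)
  have pw: "\<gamma> n / 2 * (norm (gradV f z))\<^sup>2 \<le> D z" if z: "z \<in> space \<rho>" for z
  proof -
    have t: "V (f + - (\<gamma> n *\<^sub>R gradV f z)) z - V f z \<le> gradV f z \<bullet> (- (\<gamma> n *\<^sub>R gradV f z)) + Mb * (norm (- (\<gamma> n *\<^sub>R gradV f z)))\<^sup>2"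
      using taylor[OF z, of f "- (\<gamma> n *\<^sub>R gradV f z)"] by blast
    have e1: "gradV f z \<bullet> (- (\<gamma> n *\<^sub>R gradV f z)) = - \<gamma> n * (norm (gradV f z))\<^sup>2"
      by (simp add: power2_norm_eq_inner)
    have e2: "(norm (- (\<gamma> n *\<^sub>R gradV f z)))\<^sup>2 = (\<gamma> n)\<^sup>2 * (norm (gradV f z))\<^sup>2"
      using gp by (simp add: power_mult_distrib)
    have "Mb * ((\<gamma> n)\<^sup>2 * (norm (gradV f z))\<^sup>2) = (Mb * \<gamma> n) * (\<gamma> n * (norm (gradV f z))\<^sup>2)"
      by (simp add: power2_eq_square)
    also have "\<dots> \<le> (1/2) * (\<gamma> n * (norm (gradV f z))\<^sup>2)"
      using n(2) gp by (intro mult_right_mono) auto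
    finally have ineq: "Mb * ((\<gamma> n)\<^sup>2 * (norm (gradV f z))\<^sup>2) \<le> (1/2) * (\<gamma> n * (norm (gradV f z))\<^sup>2)" .
    have t2: "V (f - \<gamma> n *\<^sub>R gradV f z) z - V f z \<le> - \<gamma> n * (norm (gradV f z))\<^sup>2 + Mb * ((\<gamma> n)\<^sup>2 * (norm (gradV f z))\<^sup>2)"
      using t unfolding e1 e2 by simp
    show ?thesis unfolding D_def using t2 ineq by linarith
  qed
  have gi: "integrable \<rho> (\<lambda>z. (norm (gradV f z))\<^sup>2)"
  proof (rule Bochner_Integration.integrable_bound[OF integrable_mult_right[OF Dint, of "2 / \<gamma> n"]])
    show "(\<lambda>z. (norm (gradV f z))\<^sup>2) \<in> borel_measurable \<rho>" using grad_meas[of f] by measurable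
    show "AE z in \<rho>. norm ((norm (gradV f z))\<^sup>2) \<le> norm (2 / \<gamma> n * D z)"
    proof (rule AE_I2)
      fix z assume z: "z \<in> space \<rho>"
      have "(norm (gradV f z))\<^sup>2 \<le> 2 / \<gamma> n * D z" using pw[OF z] gp by (simp add: field_simps)
      thus "norm ((norm (gradV f z))\<^sup>2) \<le> norm (2 / \<gamma> n * D z)"
        by (smt (verit) real_norm_def zero_le_power2)
    qed
  qed
  have "(\<integral>z. (norm (gradV f z))\<^sup>2 \<partial>\<rho>) \<le> (\<integral>z. 2 / \<gamma> n * D z \<partial>\<rho>)"
    using pw gp by (intro integral_mono_AE gi integrable_mult_right Dint AE_I2) (simp add: field_simps)
  also have "\<dots> = 2 / \<gamma> n * integral\<^sup>L \<rho> D" by simp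
  also have "\<dots> \<le> 2 / \<gamma> n * (C * \<gamma> n)" using st gp by (intro mult_left_mono) auto
  also have "\<dots> = 2 * C" using gp by simp
  finally show ?thesis using gi by simp
qed

lemma second_moment:
  assumes gi: "integrable \<rho> (\<lambda>z. (norm (gradV f z))\<^sup>2)" and B: "(\<integral>z. (norm (gradV f z))\<^sup>2 \<partial>\<rho>) \<le> B"
  shows "integrable \<rho> (\<lambda>z. (norm (gradV f z - G f))\<^sup>2)"
    "(\<integral>z. (norm (gradV f z - G f))\<^sup>2 \<partial>\<rho>) \<le> B" "(norm (G f))\<^sup>2 \<le> B"
proof -
  have eq: "(norm (gradV f z - G f))\<^sup>2 = (norm (gradV f z))\<^sup>2 - 2 * (gradV f z \<bullet> G f) + (norm (G f))\<^sup>2" for z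
    by (simp add: power2_norm_eq_inner inner_diff_left inner_diff_right inner_commute)
  have i1: "integrable \<rho> (\<lambda>z. gradV f z \<bullet> G f)" using grad_int by simp
  show int: "integrable \<rho> (\<lambda>z. (norm (gradV f z - G f))\<^sup>2)"
    unfolding eq using gi i1 by simp
  have "(\<integral>z. (norm (gradV f z - G f))\<^sup>2 \<partial>\<rho>) = (\<integral>z. (norm (gradV f z))\<^sup>2 \<partial>\<rho>) - 2 * (G f \<bullet> G f) + (norm (G f))\<^sup>2"
    unfolding eq using gi i1 grad_int[of f]
    by (simp add: Bochner_Integration.integral_add Bochner_Integration.integral_diff R.prob_space G_def)
  also have "\<dots> = (\<integral>z. (norm (gradV f z))\<^sup>2 \<partial>\<rho>) - (norm (G f))\<^sup>2"
    by (simp add: power2_norm_eq_inner)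
  finally have e: "(\<integral>z. (norm (gradV f z - G f))\<^sup>2 \<partial>\<rho>) = (\<integral>z. (norm (gradV f z))\<^sup>2 \<partial>\<rho>) - (norm (G f))\<^sup>2" .
  have "0 \<le> (\<integral>z. (norm (gradV f z - G f))\<^sup>2 \<partial>\<rho>)" by simp
  thus "(norm (G f))\<^sup>2 \<le> B" using e B by simp
  show "(\<integral>z. (norm (gradV f z - G f))\<^sup>2 \<partial>\<rho>) \<le> B" using e B by (smt (verit) zero_le_power2)
qed

end


lemma norm_diff_sq: "(norm (a - t *\<^sub>R b))\<^sup>2 = (norm a)\<^sup>2 - 2 * t * (a \<bullet> b) + t\<^sup>2 * (norm b)\<^sup>2"
  for a b :: "'a::real_inner"
proof -
  have "(norm (a - t *\<^sub>R b))\<^sup>2 = (a - t *\<^sub>R b) \<bullet> (a - t *\<^sub>R b)" by (simp add: dot_square_norm)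
  also have "\<dots> = a \<bullet> a - 2 * t * (a \<bullet> b) + t\<^sup>2 * (b \<bullet> b)"
    by (simp add: inner_diff_left inner_diff_right inner_commute[of b a] power2_eq_square algebra_simps)
  finally show ?thesis by (simp add: dot_square_norm)
qed

lemma det_conv:
  fixes v W :: "nat \<Rightarrow> 'a::real_inner" and Gf :: "'a \<Rightarrow> 'a" and g :: "nat \<Rightarrow> real"
  assumes rec: "\<And>n. n \<ge> nst \<Longrightarrow> v (Suc n) = v n - g n *\<^sub>R Gf (v n) - (W (Suc n) - W n)"
    and bnd: "\<And>n. n \<ge> nst \<Longrightarrow> norm (Gf (v n)) \<le> Gb"
    and conv: "W \<longlonglongrightarrow> Wl"
    and gpos: "\<And>n. g n > 0" and glim: "g \<longlonglongrightarrow> 0" and gsum: "\<not> summable g"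
    and pos: "\<And>r. r > 0 \<Longrightarrow> \<exists>c>0. \<forall>x. r \<le> norm (x - fK) \<longrightarrow> c \<le> (x - fK) \<bullet> Gf x"
  shows "v \<longlonglongrightarrow> fK"
proof -
  define e where "e n = W n - Wl" for n
  define w where "w n = v n + e n" for n
  define D where "D n = (norm (w n - fK))\<^sup>2" for n
  have elim: "(\<lambda>n. norm (e n)) \<longlonglongrightarrow> 0" unfolding e_def
    using conv by (intro tendsto_norm_zero LIM_zero)
  have Gb: "Gb \<ge> 0" using bnd[of nst] by (meson norm_ge_zero order_trans order_refl)
  have wrec: "w (Suc n) = w n - g n *\<^sub>R Gf (v n)" if "n \<ge> nst" for n
    using rec[OF that] unfolding w_def e_def by (simp add: algebra_simps)
  have Dstep: "D (Suc n) = D n - 2 * g n * ((v n - fK) \<bullet> Gf (v n) + e n \<bullet> Gf (v n)) + (g n)\<^sup>2 * (norm (Gf (v n)))\<^sup>2"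
    if "n \<ge> nst" for n
  proof -
    have "D (Suc n) = (norm ((w n - fK) - g n *\<^sub>R Gf (v n)))\<^sup>2" unfolding D_def wrec[OF that] by (simp add: algebra_simps)
    also have "\<dots> = D n - 2 * g n * ((w n - fK) \<bullet> Gf (v n)) + (g n)\<^sup>2 * (norm (Gf (v n)))\<^sup>2"
      unfolding D_def by (rule norm_diff_sq)
    also have "(w n - fK) \<bullet> Gf (v n) = (v n - fK) \<bullet> Gf (v n) + e n \<bullet> Gf (v n)"
      unfolding w_def by (simp add: algebra_simps inner_add_left inner_diff_left)
    finally show ?thesis .
  qed
  show ?thesis
  proof (rule LIMSEQ_I)
    fix eps :: real assume eps: "eps > 0"
    define r where "r = eps / 4"
    have r: "r > 0" using eps unfolding r_def by simp
    obtain c where c: "c > 0" "\<And>x. r \<le> norm (x - fK) \<Longrightarrow> c \<le> (x - fK) \<bullet> Gf x"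
      using pos[OF r] by blast
    have ev1: "eventually (\<lambda>n. 2 * norm (e n) * Gb + g n * Gb\<^sup>2 < c) sequentially"
    proof -
      have "(\<lambda>n. 2 * norm (e n) * Gb + g n * Gb\<^sup>2) \<longlonglongrightarrow> 2 * 0 * Gb + 0 * Gb\<^sup>2"
        by (intro tendsto_intros elim glim)
      thus ?thesis using c(1) by (intro order_tendstoD) auto
    qed
    have ev2: "eventually (\<lambda>n. norm (e n) < r / 2) sequentially"
      using elim r by (intro order_tendstoD) auto
    have ev3: "eventually (\<lambda>n. g n * Gb < r / 2) sequentially"
    proof -
      have "(\<lambda>n. g n * Gb) \<longlonglongrightarrow> 0 * Gb" by (intro tendsto_intros glim)
      thus ?thesis using r by (intro order_tendstoD) auto
    qed
    obtain n2 where n2: "\<And>n. n \<ge> n2 \<Longrightarrow> 2 * norm (e n) * Gb + g n * Gb\<^sup>2 < c \<and> norm (e n) < r / 2 \<and> g n * Gb < r / 2 \<and> n \<ge> nst"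
      using eventually_conj[OF ev1 eventually_conj[OF ev2 eventually_conj[OF ev3 eventually_ge_at_top[of nst]]]]
      by (auto simp: eventually_sequentially)
    have dec: "D (Suc n) \<le> D n - g n * c" if n: "n \<ge> n2" and far: "r \<le> norm (v n - fK)" for n
    proof -
      note nn = n2[OF n]
      have a: "c \<le> (v n - fK) \<bullet> Gf (v n)" using c(2)[OF far] .
      have b: "\<bar>e n \<bullet> Gf (v n)\<bar> \<le> norm (e n) * Gb"
      proof -
        have "\<bar>e n \<bullet> Gf (v n)\<bar> \<le> norm (e n) * norm (Gf (v n))" by (rule Cauchy_Schwarz_ineq2)
        also have "\<dots> \<le> norm (e n) * Gb" using bnd[of n] nn by (intro mult_left_mono) auto
        finally show ?thesis .
      qed
      have d: "(norm (Gf (v n)))\<^sup>2 \<le> Gb\<^sup>2" using bnd[of n] nn by (simp add: power_mono)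
      have gp: "g n > 0" by (rule gpos)
      have "D (Suc n) \<le> D n - 2 * g n * (c - norm (e n) * Gb) + (g n)\<^sup>2 * Gb\<^sup>2"
      proof -
        have "2 * g n * (c - norm (e n) * Gb) \<le> 2 * g n * ((v n - fK) \<bullet> Gf (v n) + e n \<bullet> Gf (v n))"
          using a b gp by (intro mult_left_mono) auto
        moreover have "(g n)\<^sup>2 * (norm (Gf (v n)))\<^sup>2 \<le> (g n)\<^sup>2 * Gb\<^sup>2" using d by (intro mult_left_mono) auto
        ultimately show ?thesis using Dstep[of n] nn by linarith
      qed
      also have "\<dots> = D n - g n * c - g n * (c - (2 * norm (e n) * Gb + g n * Gb\<^sup>2))"
        by (simp add: algebra_simps power2_eq_square)
      also have "\<dots> \<le> D n - g n * c" using nn gp by (simp add: mult_nonneg_nonneg)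
      finally show ?thesis .
    qed
    have "\<exists>n3\<ge>n2. norm (v n3 - fK) < r"
    proof (rule ccontr)
      assume "\<not> ?thesis"
      hence far: "\<And>n. n \<ge> n2 \<Longrightarrow> r \<le> norm (v n - fK)" by force
      have D_le: "D (n2 + k) \<le> D n2 - c * (\<Sum>i\<in>{n2..<n2+k}. g i)" for k
      proof (induction k)
        case 0 then show ?case by simp
      next
        case (Suc k)
        have "D (n2 + Suc k) \<le> D (n2 + k) - g (n2 + k) * c" using dec[of "n2 + k"] far[of "n2 + k"] by simp
        with Suc show ?case by (simp add: algebra_simps)
      qed
      have "summable g"
      proof (rule summableI_nonneg_bounded)
        show "0 \<le> g n" for n using gpos[of n] by simp
        fix n
        have "sum g {..<n} \<le> sum g {..<n2 + n}" using gpos by (intro sum_mono2) (auto intro: less_imp_le)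
        also have "\<dots> = sum g {..<n2} + sum g {n2..<n2+n}"
          unfolding lessThan_atLeast0 by (rule sum.atLeastLessThan_concat[symmetric]) auto
        also have "sum g {n2..<n2+n} \<le> D n2 / c"
        proof -
          have "c * sum g {n2..<n2+n} \<le> D n2" using D_le[of n] unfolding D_def by (smt (verit) zero_le_power2)
          thus ?thesis using c(1) by (simp add: field_simps)
        qed
        finally show "sum g {..<n} \<le> sum g {..<n2} + D n2 / c" by simp
      qed
      with gsum show False by simp
    qed
    then obtain n3 where n3: "n3 \<ge> n2" "norm (v n3 - fK) < r" by blast
    have wb: "norm (w (n3 + k) - fK) \<le> 2 * r" for k
    proof (induction k)
      case 0
      have "w n3 - fK = (v n3 - fK) + e n3" unfolding w_def by simp
      hence "norm (w n3 - fK) \<le> norm (v n3 - fK) + norm (e n3)" by (metis norm_triangle_ineq)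
      moreover have "norm (e n3) < r / 2" using n2[OF n3(1)] by blast
      ultimately have "norm (w n3 - fK) \<le> 2 * r" using n3 r by linarith
      thus ?case by simp
    next
      case (Suc k)
      define n where "n = n3 + k"
      have nn: "n \<ge> n2" using n3 unfolding n_def by simp
      note nn2 = n2[OF nn]
      show ?case
      proof (cases "r \<le> norm (v n - fK)")
        case True
        have "D (Suc n) \<le> D n" using dec[OF nn True] gpos[of n] c(1) by (smt (verit) mult_pos_pos)
        hence "norm (w (Suc n) - fK) \<le> norm (w n - fK)" unfolding D_def by (simp add: power_mono_iff)
        with Suc show ?thesis unfolding n_def by simp
      next
        case False
        have "norm (w (Suc n) - fK) = norm ((w n - fK) - g n *\<^sub>R Gf (v n))"
        proof -
          have "w (Suc n) = w n - g n *\<^sub>R Gf (v n)" using wrec[of n] nn2 by blast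
          hence "w (Suc n) - fK = (w n - fK) - g n *\<^sub>R Gf (v n)" by simp
          thus ?thesis by (rule arg_cong)
        qed
        also have "\<dots> \<le> norm (w n - fK) + g n * norm (Gf (v n))"
          using gpos[of n] by (smt (verit) norm_scaleR norm_triangle_ineq4)
        also have "g n * norm (Gf (v n)) \<le> g n * Gb" using bnd[of n] nn2 gpos[of n] by (intro mult_left_mono) auto
        also have "norm (w n - fK) \<le> norm (v n - fK) + norm (e n)"
        proof -
          have "w n - fK = (v n - fK) + e n" unfolding w_def by simp
          thus ?thesis by (metis norm_triangle_ineq)
        qed
        finally show ?thesis using False nn2 r unfolding n_def by simp
      qed
    qed
    show "\<exists>no. \<forall>n\<ge>no. norm (v n - fK) < eps"
    proof (intro exI allI impI)
      fix n assume n: "n \<ge> n3"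
      then obtain k where k: "n = n3 + k" using le_Suc_ex by blast
      have "v n - fK = (w n - fK) - e n" unfolding w_def by simp
      hence "norm (v n - fK) \<le> norm (w n - fK) + norm (e n)" by (metis norm_triangle_ineq4)
      also have "\<dots> < 2 * r + r / 2" using wb[of k] n2[of n] n n3 k by fastforce
      also have "\<dots> < eps" unfolding r_def using eps by simp
      finally show "norm (v n - fK) < eps" .
    qed
  qed
qed

context sgdset begin

lemma coercive:
  assumes r: "r > 0"
  shows "\<exists>c>0. \<forall>x. r \<le> norm (x - fK) \<longrightarrow> c \<le> (x - fK) \<bullet> G x"
proof -
  define S where "S = sphere fK r"
  have cS: "compact S" unfolding S_def by (rule compact_sphere)
  obtain b :: 'a where b: "b \<in> Basis" using nonempty_Basis by blast
  have "norm (r *\<^sub>R b) = r" using r b by simp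
  hence "fK + r *\<^sub>R b \<in> S" unfolding S_def by (simp add: dist_norm)
  hence neS: "S \<noteq> {}" by blast
  have ct: "continuous_on S (\<lambda>x. (x - fK) \<bullet> G x)"
    by (rule continuous_on_inner[OF continuous_on_diff[OF continuous_on_id continuous_on_const] G_cont])
  obtain x0 where x0: "x0 \<in> S" "\<And>y. y \<in> S \<Longrightarrow> (x0 - fK) \<bullet> G x0 \<le> (y - fK) \<bullet> G y"
    using continuous_attains_inf[OF cS neS ct] by blast
  have "dist fK x0 = r" using x0(1) unfolding S_def by simp
  hence "x0 \<noteq> fK" using r by auto
  hence c: "(x0 - fK) \<bullet> G x0 > 0" by (rule G_pos)
  show ?thesis
  proof (intro exI[of _ "(x0 - fK) \<bullet> G x0"] conjI allI impI c)
    fix x assume x: "r \<le> norm (x - fK)"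
    define t where "t = norm (x - fK)"
    have t: "t \<ge> r" "t > 0" using x r unfolding t_def by auto
    define u where "u = fK + (r / t) *\<^sub>R (x - fK)"
    have "norm ((r / t) *\<^sub>R (x - fK)) = (r / t) * t" using t r unfolding t_def by simp
    also have "\<dots> = r" using t by simp
    finally have "dist fK u = r" unfolding u_def by (simp add: dist_norm)
    hence uS: "u \<in> S" unfolding S_def by simp
    have xu: "x - u = (1 - r / t) *\<^sub>R (x - fK)" unfolding u_def by (simp add: algebra_simps)
    have uf: "x - fK = (t / r) *\<^sub>R (u - fK)" unfolding u_def using t r by simp
    have m: "(G x - G u) \<bullet> (x - u) \<ge> 0" by (rule G_mono)
    have "(G x - G u) \<bullet> (x - fK) \<ge> 0"
    proof (cases "r = t")
      case True
      hence "u = x" unfolding u_def using t by simp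
      thus ?thesis by simp
    next
      case False
      hence pos: "1 - r / t > 0" using t by (simp add: field_simps)
      from m have "(1 - r / t) * ((G x - G u) \<bullet> (x - fK)) \<ge> 0" unfolding xu by simp
      thus ?thesis using pos by (simp add: zero_le_mult_iff)
    qed
    hence A: "G u \<bullet> (x - fK) \<le> G x \<bullet> (x - fK)" by (simp add: inner_diff_left)
    have B: "G u \<bullet> (x - fK) = (t / r) * ((u - fK) \<bullet> G u)" unfolding uf by (simp add: inner_commute)
    have Cc: "(x0 - fK) \<bullet> G x0 \<le> (u - fK) \<bullet> G u" using x0(2)[OF uS] .
    have D: "t / r \<ge> 1" using t r by simp
    have "1 * ((x0 - fK) \<bullet> G x0) \<le> (t / r) * ((x0 - fK) \<bullet> G x0)"
      using c by (intro mult_right_mono[OF D]) simp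
    hence "(x0 - fK) \<bullet> G x0 \<le> (t / r) * ((x0 - fK) \<bullet> G x0)" by simp
    also have "\<dots> \<le> (t / r) * ((u - fK) \<bullet> G u)" using Cc D by (intro mult_left_mono) auto
    finally have "(x0 - fK) \<bullet> G x0 \<le> G x \<bullet> (x - fK)" using A B by linarith
    thus "(x0 - fK) \<bullet> G x0 \<le> (x - fK) \<bullet> G x" by (simp add: inner_commute)
  qed
qed

end

context sgdset begin

abbreviation "PJ j \<equiv> Pi\<^sub>M {..<j} (\<lambda>_. \<rho>)"
definition S :: "nat \<Rightarrow> 'w \<Rightarrow> (nat \<Rightarrow> 'z)" where "S j \<omega> = restrict (\<lambda>i. X i \<omega>) {..<j}"
definition DJ :: "nat \<Rightarrow> (nat \<Rightarrow> 'z) measure" where "DJ j = distr M (PJ j) (S j)"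

lemma S_meas: "S j \<in> measurable M (PJ j)"
  unfolding S_def by (intro measurable_restrict X_meas)

lemma sets_DJ: "sets (DJ j) = sets (PJ j)" and space_DJ: "space (DJ j) = space (PJ j)"
  unfolding DJ_def by auto

lemma DJ_prob: "prob_space (DJ j)"
  unfolding DJ_def by (rule P.prob_space_distr[OF S_meas])

lemma joint_distr: "distr M (PJ j \<Otimes>\<^sub>M \<rho>) (\<lambda>\<omega>. (S j \<omega>, X j \<omega>)) = DJ j \<Otimes>\<^sub>M \<rho>"
proof -
  define R where "R \<omega> = restrict (\<lambda>i. X i \<omega>) {j}" for \<omega>
  have Rm: "R \<in> measurable M (Pi\<^sub>M {j} (\<lambda>_. \<rho>))"
    unfolding R_def by (intro measurable_restrict X_meas)
  have ind: "P.indep_var (PJ j) (S j) (Pi\<^sub>M {j} (\<lambda>_. \<rho>)) R"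
    unfolding S_def R_def by (rule P.indep_var_restrict[OF X_indep]) auto
  hence Q: "DJ j \<Otimes>\<^sub>M distr M (Pi\<^sub>M {j} (\<lambda>_. \<rho>)) R = distr M (PJ j \<Otimes>\<^sub>M Pi\<^sub>M {j} (\<lambda>_. \<rho>)) (\<lambda>\<omega>. (S j \<omega>, R \<omega>))"
    unfolding DJ_def by (simp add: P.indep_var_distribution_eq)
  have ev: "(\<lambda>y. y j) \<in> measurable (Pi\<^sub>M {j} (\<lambda>_. \<rho>)) \<rho>"
    by (rule measurable_component_singleton) simp
  have Tm: "(\<lambda>(s, y). (s, y j)) \<in> measurable (PJ j \<Otimes>\<^sub>M Pi\<^sub>M {j} (\<lambda>_. \<rho>)) (PJ j \<Otimes>\<^sub>M \<rho>)"
    using ev by measurable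
  have SR: "(\<lambda>\<omega>. (S j \<omega>, R \<omega>)) \<in> measurable M (PJ j \<Otimes>\<^sub>M Pi\<^sub>M {j} (\<lambda>_. \<rho>))"
    by (intro measurable_Pair S_meas Rm)
  have dR: "distr (distr M (Pi\<^sub>M {j} (\<lambda>_. \<rho>)) R) \<rho> (\<lambda>y. y j) = \<rho>"
    using distr_distr[OF ev Rm] X_distr[of j] unfolding R_def by (simp add: comp_def)
  have sf: "sigma_finite_measure (distr (distr M (Pi\<^sub>M {j} (\<lambda>_. \<rho>)) R) \<rho> (\<lambda>y. y j))"
    unfolding dR by unfold_locales
  have "DJ j \<Otimes>\<^sub>M \<rho> = distr (DJ j) (PJ j) (\<lambda>x. x) \<Otimes>\<^sub>M distr (distr M (Pi\<^sub>M {j} (\<lambda>_. \<rho>)) R) \<rho> (\<lambda>y. y j)"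
    unfolding dR using distr_id2[OF sets_DJ[symmetric]] by simp
  also have "\<dots> = distr (DJ j \<Otimes>\<^sub>M distr M (Pi\<^sub>M {j} (\<lambda>_. \<rho>)) R) (PJ j \<Otimes>\<^sub>M \<rho>) (\<lambda>(x, y). (x, y j))"
  proof (rule pair_measure_distr[OF _ _ sf])
    show "(\<lambda>x. x) \<in> measurable (DJ j) (PJ j)" by (simp add: measurable_cong_sets[OF sets_DJ refl])
    show "(\<lambda>y. y j) \<in> measurable (distr M (Pi\<^sub>M {j} (\<lambda>_. \<rho>)) R) \<rho>" using ev by simp
  qed
  also have "\<dots> = distr (distr M (PJ j \<Otimes>\<^sub>M Pi\<^sub>M {j} (\<lambda>_. \<rho>)) (\<lambda>\<omega>. (S j \<omega>, R \<omega>))) (PJ j \<Otimes>\<^sub>M \<rho>) (\<lambda>(x, y). (x, y j))"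
    unfolding Q ..
  also have "\<dots> = distr M (PJ j \<Otimes>\<^sub>M \<rho>) ((\<lambda>(x, y). (x, y j)) \<circ> (\<lambda>\<omega>. (S j \<omega>, R \<omega>)))"
    by (rule distr_distr[OF Tm SR])
  also have "((\<lambda>(x, y). (x, y j)) \<circ> (\<lambda>\<omega>. (S j \<omega>, R \<omega>))) = (\<lambda>\<omega>. (S j \<omega>, X j \<omega>))"
    unfolding R_def by (simp add: comp_def)
  finally show ?thesis ..
qed

lemma fub:
  fixes q :: "(nat \<Rightarrow> 'z) \<times> 'z \<Rightarrow> real"
  assumes q: "q \<in> borel_measurable (PJ j \<Otimes>\<^sub>M \<rho>)"
    and iz: "\<And>s. s \<in> space (PJ j) \<Longrightarrow> integrable \<rho> (\<lambda>z. q (s, z))"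
    and bnd: "\<And>s. s \<in> space (PJ j) \<Longrightarrow> (\<integral>z. norm (q (s, z)) \<partial>\<rho>) \<le> Bd s"
    and Bd: "integrable (DJ j) Bd"
  shows "integrable M (\<lambda>\<omega>. q (S j \<omega>, X j \<omega>))"
    "(\<integral>\<omega>. q (S j \<omega>, X j \<omega>) \<partial>M) = (\<integral>s. (\<integral>z. q (s, z) \<partial>\<rho>) \<partial>DJ j)"
proof -
  interpret DP: prob_space "DJ j" by (rule DJ_prob)
  interpret PS: pair_sigma_finite "DJ j" \<rho> by unfold_locales
  have mp: "(\<lambda>\<omega>. (S j \<omega>, X j \<omega>)) \<in> measurable M (PJ j \<Otimes>\<^sub>M \<rho>)"
    by (intro measurable_Pair S_meas X_meas)
  have sets_eq: "sets (DJ j \<Otimes>\<^sub>M \<rho>) = sets (PJ j \<Otimes>\<^sub>M \<rho>)"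
    by (rule sets_pair_measure_cong[OF sets_DJ refl])
  have q': "q \<in> borel_measurable (DJ j \<Otimes>\<^sub>M \<rho>)"
    using q by (simp add: measurable_cong_sets[OF sets_eq refl])
  have nq: "(\<lambda>p. norm (q p)) \<in> borel_measurable (DJ j \<Otimes>\<^sub>M \<rho>)" using q' by measurable
  have intq: "integrable (DJ j \<Otimes>\<^sub>M \<rho>) q"
  proof (rule PS.Fubini_integrable[OF q'])
    show "integrable (DJ j) (\<lambda>x. \<integral>y. norm (q (x, y)) \<partial>\<rho>)"
    proof (rule Bochner_Integration.integrable_bound[OF Bd])
      show "(\<lambda>x. \<integral>y. norm (q (x, y)) \<partial>\<rho>) \<in> borel_measurable (DJ j)"
        using R.borel_measurable_lebesgue_integral[of "\<lambda>x y. norm (q (x, y))" "DJ j"] nq by simp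
      show "AE x in DJ j. norm (\<integral>y. norm (q (x, y)) \<partial>\<rho>) \<le> norm (Bd x)"
      proof (rule AE_I2)
        fix x assume "x \<in> space (DJ j)"
        hence x: "x \<in> space (PJ j)" by (simp add: space_DJ)
        have "0 \<le> (\<integral>y. norm (q (x, y)) \<partial>\<rho>)" by simp
        thus "norm (\<integral>y. norm (q (x, y)) \<partial>\<rho>) \<le> norm (Bd x)" using bnd[OF x] by simp
      qed
    qed
    show "AE x in DJ j. integrable \<rho> (\<lambda>y. q (x, y))"
      by (rule AE_I2) (simp add: space_DJ iz)
  qed
  have "integrable (distr M (PJ j \<Otimes>\<^sub>M \<rho>) (\<lambda>\<omega>. (S j \<omega>, X j \<omega>))) q"
    using intq joint_distr by simp
  thus "integrable M (\<lambda>\<omega>. q (S j \<omega>, X j \<omega>))"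
    using integrable_distr_eq[OF mp q] by simp
  have "(\<integral>\<omega>. q (S j \<omega>, X j \<omega>) \<partial>M) = integral\<^sup>L (distr M (PJ j \<Otimes>\<^sub>M \<rho>) (\<lambda>\<omega>. (S j \<omega>, X j \<omega>))) q"
    by (rule integral_distr[OF mp q, symmetric])
  also have "\<dots> = integral\<^sup>L (DJ j \<Otimes>\<^sub>M \<rho>) q" using joint_distr by simp
  also have "\<dots> = (\<integral>s. (\<integral>z. q (s, z) \<partial>\<rho>) \<partial>DJ j)" by (rule PS.integral_fst'[OF intq, symmetric])
  finally show "(\<integral>\<omega>. q (S j \<omega>, X j \<omega>) \<partial>M) = (\<integral>s. (\<integral>z. q (s, z) \<partial>\<rho>) \<partial>DJ j)" .
qed

end

context sgdset begin

definition xi :: "nat \<Rightarrow> (nat \<Rightarrow> 'z) \<Rightarrow> 'a" where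
  "xi n s = \<gamma> n *\<^sub>R (gradV (sgd \<gamma> gradV s n) (s n) - G (sgd \<gamma> gradV s n))"
definition Ws :: "nat \<Rightarrow> nat \<Rightarrow> (nat \<Rightarrow> 'z) \<Rightarrow> 'a" where
  "Ws m k s = (\<Sum>i\<in>{m..<k}. xi i s)"

lemma xi_cong: "(\<And>i. i \<le> n \<Longrightarrow> s i = s' i) \<Longrightarrow> xi n s = xi n s'"
  unfolding xi_def using sgd_cong[of n s s' \<gamma> gradV] by simp

lemma Ws_cong: "(\<And>i. i < k \<Longrightarrow> s i = s' i) \<Longrightarrow> Ws m k s = Ws m k s'"
  unfolding Ws_def by (intro sum.cong refl xi_cong) auto

lemma G_meas: "G \<in> borel_measurable borel"
  by (rule borel_measurable_continuous_onI[OF G_cont])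

lemma xi_meas: "(\<And>i. i \<le> n \<Longrightarrow> Y i \<in> measurable Q \<rho>) \<Longrightarrow> (\<lambda>x. xi n (\<lambda>i. Y i x)) \<in> borel_measurable Q"
proof -
  assume Y: "\<And>i. i \<le> n \<Longrightarrow> Y i \<in> measurable Q \<rho>"
  have f: "(\<lambda>x. sgd \<gamma> gradV (\<lambda>i. Y i x) n) \<in> borel_measurable Q" by (rule sgd_meas) (use Y in auto)
  have g: "(\<lambda>x. gradV (sgd \<gamma> gradV (\<lambda>i. Y i x) n) (Y n x)) \<in> borel_measurable Q"
    by (rule grad_comp[OF f Y]) simp
  have h: "(\<lambda>x. G (sgd \<gamma> gradV (\<lambda>i. Y i x) n)) \<in> borel_measurable Q"
    using measurable_comp[OF f G_meas] by (simp add: comp_def)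
  show ?thesis unfolding xi_def using g h by measurable
qed

lemma Ws_meas: "(\<And>i. i < k \<Longrightarrow> Y i \<in> measurable Q \<rho>) \<Longrightarrow> (\<lambda>x. Ws m k (\<lambda>i. Y i x)) \<in> borel_measurable Q"
  unfolding Ws_def by (intro borel_measurable_sum xi_meas) auto

definition n1 :: nat where "n1 = (SOME n1. n1 > N \<and> (\<forall>n\<ge>n1. Mb * \<gamma> n \<le> 1/2))"

lemma n1: "n1 > N" "\<And>n. n \<ge> n1 \<Longrightarrow> Mb * \<gamma> n \<le> 1/2"
  using someI_ex[OF exists_n1] unfolding n1_def by auto

definition z0 where "z0 = (SOME z. z \<in> space \<rho>)"
lemma z0: "z0 \<in> space \<rho>" unfolding z0_def using R.not_empty by (simp add: some_in_eq)

lemma moments: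
  assumes n: "n \<ge> n1" and s: "\<And>i. i < n \<Longrightarrow> s i \<in> space \<rho>"
  shows "integrable \<rho> (\<lambda>z. (norm (gradV (sgd \<gamma> gradV s n) z - G (sgd \<gamma> gradV s n)))\<^sup>2)"
    "(\<integral>z. (norm (gradV (sgd \<gamma> gradV s n) z - G (sgd \<gamma> gradV s n)))\<^sup>2 \<partial>\<rho>) \<le> 2 * C"
    "(norm (G (sgd \<gamma> gradV s n)))\<^sup>2 \<le> 2 * C"
proof -
  define s' where "s' i = (if i < n then s i else z0)" for i
  have s': "\<forall>i. s' i \<in> space \<rho>" using s z0 unfolding s'_def by auto
  have eq: "sgd \<gamma> gradV s n = sgd \<gamma> gradV s' n" by (rule sgd_cong) (simp add: s'_def)
  have "n > N" using n n1 by simp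
  from moment_bound[OF this n1(2)[OF n] s'] have mb:
    "integrable \<rho> (\<lambda>z. (norm (gradV (sgd \<gamma> gradV s' n) z))\<^sup>2)"
    "(\<integral>z. (norm (gradV (sgd \<gamma> gradV s' n) z))\<^sup>2 \<partial>\<rho>) \<le> 2 * C" by auto
  from second_moment[OF mb] show
    "integrable \<rho> (\<lambda>z. (norm (gradV (sgd \<gamma> gradV s n) z - G (sgd \<gamma> gradV s n)))\<^sup>2)"
    "(\<integral>z. (norm (gradV (sgd \<gamma> gradV s n) z - G (sgd \<gamma> gradV s n)))\<^sup>2 \<partial>\<rho>) \<le> 2 * C"
    "(norm (G (sgd \<gamma> gradV s n)))\<^sup>2 \<le> 2 * C" unfolding eq by auto
qed

abbreviation "Xs \<omega> \<equiv> (\<lambda>i. X i \<omega>)"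

lemma S_app: "i < j \<Longrightarrow> S j \<omega> i = X i \<omega>" unfolding S_def by simp

lemma sgd_S: "sgd \<gamma> gradV (S j \<omega>) j = sgd \<gamma> gradV (Xs \<omega>) j"
  by (rule sgd_cong) (simp add: S_app)

lemma space_PJ: "s \<in> space (PJ j) \<Longrightarrow> i < j \<Longrightarrow> s i \<in> space \<rho>"
  by (auto simp: space_PiM)

lemma PJ_meas: "i < j \<Longrightarrow> (\<lambda>s. s i) \<in> measurable (PJ j) \<rho>"
  by (rule measurable_component_singleton) simp

lemma orth:
  assumes j: "j \<ge> n1" and Phi: "Phi \<in> borel_measurable (PJ j)"
    and Pint: "integrable (DJ j) (\<lambda>s. (norm (Phi s))\<^sup>2)"
  shows "integrable M (\<lambda>\<omega>. Phi (S j \<omega>) \<bullet> xi j (Xs \<omega>))" "(\<integral>\<omega>. Phi (S j \<omega>) \<bullet> xi j (Xs \<omega>) \<partial>M) = 0"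
proof -
  define F where "F s = sgd \<gamma> gradV s j" for s
  define q where "q p = Phi (fst p) \<bullet> (\<gamma> j *\<^sub>R (gradV (F (fst p)) (snd p) - G (F (fst p))))" for p
  have Fm: "F \<in> borel_measurable (PJ j)" unfolding F_def by (rule sgd_meas[where Y="\<lambda>i s. s i"]) (rule PJ_meas)
  have qm: "q \<in> borel_measurable (PJ j \<Otimes>\<^sub>M \<rho>)"
  proof -
    have a: "(\<lambda>p. F (fst p)) \<in> borel_measurable (PJ j \<Otimes>\<^sub>M \<rho>)" using Fm by measurable
    have b: "(\<lambda>p. gradV (F (fst p)) (snd p)) \<in> borel_measurable (PJ j \<Otimes>\<^sub>M \<rho>)"
      by (rule grad_comp[OF a]) measurable
    have c: "(\<lambda>p. G (F (fst p))) \<in> borel_measurable (PJ j \<Otimes>\<^sub>M \<rho>)"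
      using measurable_comp[OF a G_meas] by (simp add: comp_def)
    have d: "(\<lambda>p. Phi (fst p)) \<in> borel_measurable (PJ j \<Otimes>\<^sub>M \<rho>)" using Phi by measurable
    show ?thesis unfolding q_def using b c d by measurable
  qed
  have xi_eq: "xi j (Xs \<omega>) = \<gamma> j *\<^sub>R (gradV (F (S j \<omega>)) (X j \<omega>) - G (F (S j \<omega>)))" for \<omega>
    unfolding xi_def F_def sgd_S by simp
  have mo: "integrable \<rho> (\<lambda>z. (norm (gradV (F s) z - G (F s)))\<^sup>2)"
    "(\<integral>z. (norm (gradV (F s) z - G (F s)))\<^sup>2 \<partial>\<rho>) \<le> 2 * C" if s: "s \<in> space (PJ j)" for s
    using moments[OF j, of s] space_PJ[OF s] unfolding F_def by auto
  have iz: "integrable \<rho> (\<lambda>z. q (s, z))" for s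
    unfolding q_def using grad_int[of "F s"] by simp
  have bnd: "(\<integral>z. norm (q (s, z)) \<partial>\<rho>) \<le> (norm (Phi s))\<^sup>2 / 2 + (\<gamma> j)\<^sup>2 * C" if s: "s \<in> space (PJ j)" for s
  proof -
    have pw: "norm (q (s, z)) \<le> (norm (Phi s))\<^sup>2 / 2 + (\<gamma> j)\<^sup>2 / 2 * (norm (gradV (F s) z - G (F s)))\<^sup>2" for z
    proof -
      have "norm (q (s, z)) \<le> norm (Phi s) * norm (\<gamma> j *\<^sub>R (gradV (F s) z - G (F s)))"
        unfolding q_def real_norm_def fst_conv snd_conv by (rule Cauchy_Schwarz_ineq2)
      also have "\<dots> = norm (Phi s) * (\<gamma> j * norm (gradV (F s) z - G (F s)))"
        using \<gamma>_pos[of j] by simp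
      also have "\<dots> \<le> (norm (Phi s))\<^sup>2 / 2 + (\<gamma> j * norm (gradV (F s) z - G (F s)))\<^sup>2 / 2"
        using sum_squares_ge_zero[of "norm (Phi s) - \<gamma> j * norm (gradV (F s) z - G (F s))" 0]
        by (simp add: power2_eq_square algebra_simps)
      finally show ?thesis by (simp add: power_mult_distrib)
    qed
    have "(\<integral>z. norm (q (s, z)) \<partial>\<rho>) \<le> (\<integral>z. (norm (Phi s))\<^sup>2 / 2 + (\<gamma> j)\<^sup>2 / 2 * (norm (gradV (F s) z - G (F s)))\<^sup>2 \<partial>\<rho>)"
      using pw mo(1)[OF s] iz[of s] by (intro integral_mono) auto
    also have "\<dots> = (norm (Phi s))\<^sup>2 / 2 + (\<gamma> j)\<^sup>2 / 2 * (\<integral>z. (norm (gradV (F s) z - G (F s)))\<^sup>2 \<partial>\<rho>)"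
      using mo(1)[OF s] by (simp add: R.prob_space)
    also have "\<dots> \<le> (norm (Phi s))\<^sup>2 / 2 + (\<gamma> j)\<^sup>2 / 2 * (2 * C)"
      using mo(2)[OF s] by (intro add_left_mono mult_left_mono) auto
    finally show ?thesis by simp
  qed
  have Bd: "integrable (DJ j) (\<lambda>s. (norm (Phi s))\<^sup>2 / 2 + (\<gamma> j)\<^sup>2 * C)"
  proof -
    interpret DP: prob_space "DJ j" by (rule DJ_prob)
    show ?thesis using Pint by simp
  qed
  note fb = fub[OF qm _ bnd Bd, OF iz]
  have inner0: "(\<integral>z. q (s, z) \<partial>\<rho>) = 0" for s
  proof -
    have "(\<integral>z. q (s, z) \<partial>\<rho>) = Phi s \<bullet> (\<gamma> j *\<^sub>R ((\<integral>z. gradV (F s) z \<partial>\<rho>) - G (F s)))"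
      unfolding q_def using grad_int[of "F s"]
      by (simp add: Bochner_Integration.integral_diff R.prob_space)
    also have "\<dots> = 0" unfolding G_def by simp
    finally show ?thesis .
  qed
  have e: "(\<lambda>\<omega>. Phi (S j \<omega>) \<bullet> xi j (Xs \<omega>)) = (\<lambda>\<omega>. q (S j \<omega>, X j \<omega>))"
    unfolding q_def xi_eq by simp
  show "integrable M (\<lambda>\<omega>. Phi (S j \<omega>) \<bullet> xi j (Xs \<omega>))" unfolding e by (rule fb(1))
  have "(\<integral>\<omega>. Phi (S j \<omega>) \<bullet> xi j (Xs \<omega>) \<partial>M) = (\<integral>s. (\<integral>z. q (s, z) \<partial>\<rho>) \<partial>DJ j)"
    unfolding e by (rule fb(2))
  thus "(\<integral>\<omega>. Phi (S j \<omega>) \<bullet> xi j (Xs \<omega>) \<partial>M) = 0" unfolding inner0 by simp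
qed

lemma xi_moment:
  assumes j: "j \<ge> n1"
  shows "integrable M (\<lambda>\<omega>. (norm (xi j (Xs \<omega>)))\<^sup>2)" "(\<integral>\<omega>. (norm (xi j (Xs \<omega>)))\<^sup>2 \<partial>M) \<le> (\<gamma> j)\<^sup>2 * (2 * C)"
proof -
  interpret DP: prob_space "DJ j" by (rule DJ_prob)
  define F where "F s = sgd \<gamma> gradV s j" for s
  define q where "q p = (\<gamma> j)\<^sup>2 * (norm (gradV (F (fst p)) (snd p) - G (F (fst p))))\<^sup>2" for p
  have Fm: "F \<in> borel_measurable (PJ j)" unfolding F_def by (rule sgd_meas[where Y="\<lambda>i s. s i"]) (rule PJ_meas)
  have qm: "q \<in> borel_measurable (PJ j \<Otimes>\<^sub>M \<rho>)"
  proof -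
    have a: "(\<lambda>p. F (fst p)) \<in> borel_measurable (PJ j \<Otimes>\<^sub>M \<rho>)" using Fm by measurable
    have b: "(\<lambda>p. gradV (F (fst p)) (snd p)) \<in> borel_measurable (PJ j \<Otimes>\<^sub>M \<rho>)"
      by (rule grad_comp[OF a]) measurable
    have c: "(\<lambda>p. G (F (fst p))) \<in> borel_measurable (PJ j \<Otimes>\<^sub>M \<rho>)"
      using measurable_comp[OF a G_meas] by (simp add: comp_def)
    show ?thesis unfolding q_def using b c by measurable
  qed
  have mo: "integrable \<rho> (\<lambda>z. (norm (gradV (F s) z - G (F s)))\<^sup>2)"
    "(\<integral>z. (norm (gradV (F s) z - G (F s)))\<^sup>2 \<partial>\<rho>) \<le> 2 * C" if s: "s \<in> space (PJ j)" for s
    using moments[OF j, of s] space_PJ[OF s] unfolding F_def by auto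
  have iz: "integrable \<rho> (\<lambda>z. q (s, z))" if "s \<in> space (PJ j)" for s
    unfolding q_def using mo(1)[OF that] by simp
  have inn: "(\<integral>z. q (s, z) \<partial>\<rho>) \<le> (\<gamma> j)\<^sup>2 * (2 * C)" if s: "s \<in> space (PJ j)" for s
    unfolding q_def using mo[OF s] by (simp add: mult_left_mono)
  have bnd: "(\<integral>z. norm (q (s, z)) \<partial>\<rho>) \<le> (\<gamma> j)\<^sup>2 * (2 * C)" if s: "s \<in> space (PJ j)" for s
  proof -
    have "(\<integral>z. norm (q (s, z)) \<partial>\<rho>) = (\<integral>z. q (s, z) \<partial>\<rho>)" unfolding q_def by simp
    thus ?thesis using inn[OF s] by simp
  qed
  have Bd: "integrable (DJ j) (\<lambda>s. (\<gamma> j)\<^sup>2 * (2 * C))" by simp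
  note fb = fub[OF qm iz bnd Bd]
  have e: "(\<lambda>\<omega>. (norm (xi j (Xs \<omega>)))\<^sup>2) = (\<lambda>\<omega>. q (S j \<omega>, X j \<omega>))"
    unfolding q_def xi_def F_def using \<gamma>_pos[of j] by (simp add: fun_eq_iff power_mult_distrib sgd_S)
  show "integrable M (\<lambda>\<omega>. (norm (xi j (Xs \<omega>)))\<^sup>2)" unfolding e by (rule fb(1))
  have "(\<integral>s. (\<integral>z. q (s, z) \<partial>\<rho>) \<partial>DJ j) \<le> (\<integral>s. (\<gamma> j)\<^sup>2 * (2 * C) \<partial>DJ j)"
  proof (rule integral_mono_AE)
    show "integrable (DJ j) (\<lambda>s. \<integral>z. q (s, z) \<partial>\<rho>)"
    proof (rule Bochner_Integration.integrable_bound[OF Bd])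
      show "(\<lambda>s. \<integral>z. q (s, z) \<partial>\<rho>) \<in> borel_measurable (DJ j)"
        using R.borel_measurable_lebesgue_integral[of "\<lambda>x y. q (x, y)" "DJ j"] qm
        by (simp add: measurable_cong_sets[OF sets_pair_measure_cong[OF sets_DJ refl] refl])
      show "AE x in DJ j. norm (\<integral>z. q (x, z) \<partial>\<rho>) \<le> norm ((\<gamma> j)\<^sup>2 * (2 * C))"
      proof (rule AE_I2)
        fix x assume "x \<in> space (DJ j)"
        hence x: "x \<in> space (PJ j)" by (simp add: space_DJ)
        have "0 \<le> (\<integral>z. q (x, z) \<partial>\<rho>)" unfolding q_def by simp
        thus "norm (\<integral>z. q (x, z) \<partial>\<rho>) \<le> norm ((\<gamma> j)\<^sup>2 * (2 * C))" using inn[OF x] C_pos by simp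
      qed
    qed
    show "AE s in DJ j. (\<integral>z. q (s, z) \<partial>\<rho>) \<le> (\<gamma> j)\<^sup>2 * (2 * C)"
      by (rule AE_I2) (simp add: space_DJ inn)
  qed simp
  moreover have "(\<integral>\<omega>. (norm (xi j (Xs \<omega>)))\<^sup>2 \<partial>M) = (\<integral>s. (\<integral>z. q (s, z) \<partial>\<rho>) \<partial>DJ j)"
    unfolding e by (rule fb(2))
  ultimately show "(\<integral>\<omega>. (norm (xi j (Xs \<omega>)))\<^sup>2 \<partial>M) \<le> (\<gamma> j)\<^sup>2 * (2 * C)"
    by (simp add: DP.prob_space)
qed

end

context sgdset begin

lemma Wo_meas: "(\<lambda>\<omega>. Ws m k (Xs \<omega>)) \<in> borel_measurable M"
  by (rule Ws_meas) (rule X_meas)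

lemma xio_meas: "(\<lambda>\<omega>. xi k (Xs \<omega>)) \<in> borel_measurable M"
  by (rule xi_meas) (rule X_meas)

lemma Ws_S: "k \<le> j \<Longrightarrow> Ws m k (S j \<omega>) = Ws m k (Xs \<omega>)"
  by (rule Ws_cong) (simp add: S_app)

lemma Ws_PJ_meas: "k \<le> j \<Longrightarrow> Ws m k \<in> borel_measurable (PJ j)"
  using Ws_meas[of k "\<lambda>i s. s i" "PJ j" m] PJ_meas by simp

lemma transport:
  fixes f :: "(nat \<Rightarrow> 'z) \<Rightarrow> real"
  assumes f: "f \<in> borel_measurable (PJ j)" and i: "integrable M (\<lambda>\<omega>. f (S j \<omega>))"
  shows "integrable (DJ j) f"
  unfolding DJ_def using integrable_distr_eq[OF S_meas[of j] f] i by simp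

lemma Ws_split: "m \<le> k \<Longrightarrow> k \<le> n \<Longrightarrow> Ws m n s = Ws m k s + Ws k n s"
  unfolding Ws_def by (simp add: sum.atLeastLessThan_concat)

lemma Ws_Suc: "m \<le> k \<Longrightarrow> Ws m (Suc k) s = Ws m k s + xi k s"
  unfolding Ws_def by simp

lemma norm_add_sq: "(norm (a + b))\<^sup>2 = (norm a)\<^sup>2 + 2 * (a \<bullet> b) + (norm b)\<^sup>2" for a b :: 'a
  by (simp add: dot_square_norm[symmetric] inner_add_left inner_add_right inner_commute[of b a])

lemma W2:
  assumes m: "m \<ge> n1"
  shows "integrable M (\<lambda>\<omega>. (norm (Ws m k (Xs \<omega>)))\<^sup>2) \<and>
         (\<integral>\<omega>. (norm (Ws m k (Xs \<omega>)))\<^sup>2 \<partial>M) \<le> (\<Sum>i\<in>{m..<k}. (\<gamma> i)\<^sup>2 * (2 * C))"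
proof (induction k)
  case 0 then show ?case by (simp add: Ws_def)
next
  case (Suc k)
  show ?case
  proof (cases "m \<le> k")
    case False
    hence "{m..<Suc k} = {}" by auto
    thus ?thesis by (simp add: Ws_def)
  next
    case True
    have k: "k \<ge> n1" using True m by simp
    note IH = Suc.IH
    have Phi: "Ws m k \<in> borel_measurable (PJ k)" by (rule Ws_PJ_meas) simp
    have Pint: "integrable (DJ k) (\<lambda>s. (norm (Ws m k s))\<^sup>2)"
      by (rule transport) (use Phi IH Ws_S[of k k] in auto)
    note o = orth[OF k Phi Pint]
    have e: "(\<lambda>\<omega>. Ws m k (S k \<omega>) \<bullet> xi k (Xs \<omega>)) = (\<lambda>\<omega>. Ws m k (Xs \<omega>) \<bullet> xi k (Xs \<omega>))"
      by (simp add: Ws_S)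
    have o1: "integrable M (\<lambda>\<omega>. Ws m k (Xs \<omega>) \<bullet> xi k (Xs \<omega>))" using o(1) unfolding e .
    have o2: "(\<integral>\<omega>. Ws m k (Xs \<omega>) \<bullet> xi k (Xs \<omega>) \<partial>M) = 0" using o(2) unfolding e .
    have eq: "(norm (Ws m (Suc k) (Xs \<omega>)))\<^sup>2 = (norm (Ws m k (Xs \<omega>)))\<^sup>2 + 2 * (Ws m k (Xs \<omega>) \<bullet> xi k (Xs \<omega>)) + (norm (xi k (Xs \<omega>)))\<^sup>2" for \<omega>
      unfolding Ws_Suc[OF True] by (rule norm_add_sq)
    note xm = xi_moment[OF k]
    have int: "integrable M (\<lambda>\<omega>. (norm (Ws m (Suc k) (Xs \<omega>)))\<^sup>2)"
      unfolding eq using IH o1 xm(1) by simp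
    have "(\<integral>\<omega>. (norm (Ws m (Suc k) (Xs \<omega>)))\<^sup>2 \<partial>M) =
       (\<integral>\<omega>. (norm (Ws m k (Xs \<omega>)))\<^sup>2 \<partial>M) + 2 * (\<integral>\<omega>. Ws m k (Xs \<omega>) \<bullet> xi k (Xs \<omega>) \<partial>M) + (\<integral>\<omega>. (norm (xi k (Xs \<omega>)))\<^sup>2 \<partial>M)"
      unfolding eq using IH o1 xm(1) by (simp add: Bochner_Integration.integral_add)
    also have "\<dots> \<le> (\<Sum>i\<in>{m..<k}. (\<gamma> i)\<^sup>2 * (2 * C)) + 0 + (\<gamma> k)\<^sup>2 * (2 * C)"
      using IH xm(2) o2 by simp
    also have "\<dots> = (\<Sum>i\<in>{m..<Suc k}. (\<gamma> i)\<^sup>2 * (2 * C))" using True by simp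
    finally show ?thesis using int by simp
  qed
qed

lemma kolmo:
  assumes m: "m \<ge> n1" and mn: "m \<le> n" and eps: "eps > 0"
  shows "P.prob {\<omega>\<in>space M. \<exists>k\<in>{m..n}. eps \<le> norm (Ws m k (Xs \<omega>))}
           \<le> (\<Sum>i\<in>{m..<n}. (\<gamma> i)\<^sup>2 * (2 * C)) / eps\<^sup>2"
proof -
  define W where "W a b \<omega> = Ws a b (Xs \<omega>)" for a b \<omega>
  define Ak where "Ak k = {\<omega>\<in>space M. eps \<le> norm (W m k \<omega>) \<and> (\<forall>i\<in>{m..<k}. norm (W m i \<omega>) < eps)}" for k
  define A where "A = {\<omega>\<in>space M. \<exists>k\<in>{m..n}. eps \<le> norm (W m k \<omega>)}"
  have Wm[measurable]: "(\<lambda>\<omega>. W a b \<omega>) \<in> borel_measurable M" for a b unfolding W_def by (rule Wo_meas)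
  have Ak_sets[measurable]: "Ak k \<in> sets M" for k unfolding Ak_def by measurable
  have A_sets: "A \<in> sets M" unfolding A_def by measurable
  have W2': "integrable M (\<lambda>\<omega>. (norm (W a b \<omega>))\<^sup>2)" if "a \<ge> n1" for a b
    using W2[OF that, of b] unfolding W_def by simp
  have disj: "disjoint_family_on Ak {m..n}"
  proof (unfold disjoint_family_on_def, intro ballI impI)
    fix k1 k2 assume k: "k1 \<in> {m..n}" "k2 \<in> {m..n}" "k1 \<noteq> k2"
    show "Ak k1 \<inter> Ak k2 = {}"
    proof (cases "k1 < k2")
      case True
      thus ?thesis using k unfolding Ak_def by force
    next
      case False
      hence "k2 < k1" using k by simp
      thus ?thesis using k unfolding Ak_def by force
    qed
  qed
  have AU: "A = (\<Union>k\<in>{m..n}. Ak k)"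
  proof
    show "(\<Union>k\<in>{m..n}. Ak k) \<subseteq> A" unfolding A_def Ak_def by auto
    show "A \<subseteq> (\<Union>k\<in>{m..n}. Ak k)"
    proof
      fix \<omega> assume w: "\<omega> \<in> A"
      define P where "P k \<longleftrightarrow> k \<in> {m..n} \<and> eps \<le> norm (W m k \<omega>)" for k
      have ex: "\<exists>k. P k" using w unfolding A_def P_def by auto
      define k0 where "k0 = (LEAST k. P k)"
      have Pk0: "P k0" unfolding k0_def using LeastI_ex[OF ex] .
      have lt: "\<not> P i" if "i < k0" for i using not_less_Least[OF that[unfolded k0_def]] by simp
      have "\<omega> \<in> Ak k0"
        unfolding Ak_def using w Pk0 lt unfolding A_def P_def by force
      thus "\<omega> \<in> (\<Union>k\<in>{m..n}. Ak k)" using Pk0 unfolding P_def by blast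
    qed
  qed
  have ind: "indicator A \<omega> = (\<Sum>k\<in>{m..n}. indicator (Ak k) \<omega> :: real)" for \<omega>
    unfolding AU by (rule indicator_UN_disjoint[OF _ disj]) simp
  have key: "(\<integral>\<omega>. indicator (Ak k) \<omega> * eps\<^sup>2 \<partial>M) \<le> (\<integral>\<omega>. indicator (Ak k) \<omega> * (norm (W m n \<omega>))\<^sup>2 \<partial>M)"
    if k: "k \<in> {m..n}" for k
  proof -
    have km: "m \<le> k" "k \<le> n" "k \<ge> n1" using k m by auto
    have i1: "integrable M (\<lambda>\<omega>. indicator (Ak k) \<omega> * (norm (W m k \<omega>))\<^sup>2)"
      using integrable_real_mult_indicator[OF Ak_sets W2'[OF m]] by (simp add: mult.commute)
    have i3: "integrable M (\<lambda>\<omega>. indicator (Ak k) \<omega> * (norm (W k n \<omega>))\<^sup>2)"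
      using integrable_real_mult_indicator[OF Ak_sets W2'[OF km(3)]] by (simp add: mult.commute)
    define Phi where "Phi s = (if eps \<le> norm (Ws m k s) \<and> (\<forall>i\<in>{m..<k}. norm (Ws m i s) < eps) then Ws m k s else 0)" for s
    have cross: "integrable M (\<lambda>\<omega>. (indicator (Ak k) \<omega> *\<^sub>R W m k \<omega>) \<bullet> xi j (Xs \<omega>))
       \<and> (\<integral>\<omega>. (indicator (Ak k) \<omega> *\<^sub>R W m k \<omega>) \<bullet> xi j (Xs \<omega>) \<partial>M) = 0" if j: "j \<in> {k..<n}" for j
    proof -
      have jk: "k \<le> j" "j \<ge> n1" using j km by auto
      have [measurable]: "Ws m i \<in> borel_measurable (PJ j)" if "i \<le> k" for i
        using that jk by (intro Ws_PJ_meas) simp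
      have Pm: "Phi \<in> borel_measurable (PJ j)" unfolding Phi_def by measurable
      have PS: "Phi (S j \<omega>) = indicator (Ak k) \<omega> *\<^sub>R W m k \<omega>" if w: "\<omega> \<in> space M" for \<omega>
      proof -
        have "Ws m i (S j \<omega>) = W m i \<omega>" if "i \<le> k" for i using that jk Ws_S[of i j m \<omega>] unfolding W_def by simp
        thus ?thesis unfolding Phi_def Ak_def using w by (auto simp: indicator_def)
      qed
      have eqs: "(norm (Phi (S j \<omega>)))\<^sup>2 = indicator (Ak k) \<omega> * (norm (W m k \<omega>))\<^sup>2" if "\<omega> \<in> space M" for \<omega>
        using PS[OF that] by (simp add: indicator_def power_mult_distrib)
      have "integrable M (\<lambda>\<omega>. (norm (Phi (S j \<omega>)))\<^sup>2)"
      proof -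
        have "integrable M (\<lambda>\<omega>. (norm (Phi (S j \<omega>)))\<^sup>2) = integrable M (\<lambda>\<omega>. indicator (Ak k) \<omega> * (norm (W m k \<omega>))\<^sup>2)"
          by (rule Bochner_Integration.integrable_cong) (auto simp: eqs)
        thus ?thesis using i1 by simp
      qed
      hence Pint: "integrable (DJ j) (\<lambda>s. (norm (Phi s))\<^sup>2)"
        by (intro transport) (use Pm in measurable)
      note o = orth[OF jk(2) Pm Pint]
      have ce: "\<And>\<omega>. \<omega> \<in> space M \<Longrightarrow> Phi (S j \<omega>) \<bullet> xi j (Xs \<omega>) = (indicator (Ak k) \<omega> *\<^sub>R W m k \<omega>) \<bullet> xi j (Xs \<omega>)"
        using PS by simp
      have c1: "integrable M (\<lambda>\<omega>. Phi (S j \<omega>) \<bullet> xi j (Xs \<omega>)) = integrable M (\<lambda>\<omega>. (indicator (Ak k) \<omega> *\<^sub>R W m k \<omega>) \<bullet> xi j (Xs \<omega>))"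
        by (rule Bochner_Integration.integrable_cong) (auto simp: ce)
      have c2: "(\<integral>\<omega>. Phi (S j \<omega>) \<bullet> xi j (Xs \<omega>) \<partial>M) = (\<integral>\<omega>. (indicator (Ak k) \<omega> *\<^sub>R W m k \<omega>) \<bullet> xi j (Xs \<omega>) \<partial>M)"
        by (rule Bochner_Integration.integral_cong) (auto simp: ce)
      show ?thesis using o c1 c2 by simp
    qed
    have Wsplit: "W m n \<omega> = W m k \<omega> + W k n \<omega>" for \<omega> unfolding W_def using Ws_split[OF km(1,2)] by simp
    have Wkn: "W k n \<omega> = (\<Sum>j\<in>{k..<n}. xi j (Xs \<omega>))" for \<omega> unfolding W_def Ws_def by simp
    have crossint: "integrable M (\<lambda>\<omega>. (indicator (Ak k) \<omega> *\<^sub>R W m k \<omega>) \<bullet> W k n \<omega>)"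
      and cross0: "(\<integral>\<omega>. (indicator (Ak k) \<omega> *\<^sub>R W m k \<omega>) \<bullet> W k n \<omega> \<partial>M) = 0"
    proof -
      have e: "(\<lambda>\<omega>. (indicator (Ak k) \<omega> *\<^sub>R W m k \<omega>) \<bullet> W k n \<omega>) = (\<lambda>\<omega>. \<Sum>j\<in>{k..<n}. (indicator (Ak k) \<omega> *\<^sub>R W m k \<omega>) \<bullet> xi j (Xs \<omega>))"
        unfolding Wkn by (simp add: inner_sum_right)
      show "integrable M (\<lambda>\<omega>. (indicator (Ak k) \<omega> *\<^sub>R W m k \<omega>) \<bullet> W k n \<omega>)"
        unfolding e using cross by (intro Bochner_Integration.integrable_sum) auto
      show "(\<integral>\<omega>. (indicator (Ak k) \<omega> *\<^sub>R W m k \<omega>) \<bullet> W k n \<omega> \<partial>M) = 0"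
        unfolding e using cross by (subst Bochner_Integration.integral_sum) auto
    qed
    have pw: "indicator (Ak k) \<omega> * (norm (W m n \<omega>))\<^sup>2 = indicator (Ak k) \<omega> * (norm (W m k \<omega>))\<^sup>2
        + 2 * ((indicator (Ak k) \<omega> *\<^sub>R W m k \<omega>) \<bullet> W k n \<omega>) + indicator (Ak k) \<omega> * (norm (W k n \<omega>))\<^sup>2" for \<omega>
      unfolding Wsplit norm_add_sq by (simp add: algebra_simps)
    have "(\<integral>\<omega>. indicator (Ak k) \<omega> * eps\<^sup>2 \<partial>M) \<le> (\<integral>\<omega>. indicator (Ak k) \<omega> * (norm (W m k \<omega>))\<^sup>2 \<partial>M)"
    proof (rule integral_mono[OF _ i1])
      show "integrable M (\<lambda>\<omega>. indicator (Ak k) \<omega> * eps\<^sup>2)"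
        using integrable_real_mult_indicator[OF Ak_sets, of "\<lambda>_. eps\<^sup>2"] by (simp add: mult.commute)
      fix \<omega> show "indicator (Ak k) \<omega> * eps\<^sup>2 \<le> indicator (Ak k) \<omega> * (norm (W m k \<omega>))\<^sup>2"
        unfolding Ak_def using eps by (auto simp: indicator_def intro: power_mono)
    qed
    also have "\<dots> \<le> (\<integral>\<omega>. indicator (Ak k) \<omega> * (norm (W m k \<omega>))\<^sup>2 \<partial>M) + 2 * 0 + (\<integral>\<omega>. indicator (Ak k) \<omega> * (norm (W k n \<omega>))\<^sup>2 \<partial>M)"
      by (simp add: integral_nonneg_AE)
    also have "\<dots> = (\<integral>\<omega>. indicator (Ak k) \<omega> * (norm (W m n \<omega>))\<^sup>2 \<partial>M)"
      unfolding pw cross0[symmetric] using i1 i3 crossint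
      by (simp add: Bochner_Integration.integral_add)
    finally show ?thesis .
  qed
  have iWn: "integrable M (\<lambda>\<omega>. (norm (W m n \<omega>))\<^sup>2)" by (rule W2'[OF m])
  have "eps\<^sup>2 * P.prob A = (\<integral>\<omega>. indicator A \<omega> * eps\<^sup>2 \<partial>M)"
    using A_sets by (simp add: mult.commute)
  also have "\<dots> = (\<Sum>k\<in>{m..n}. (\<integral>\<omega>. indicator (Ak k) \<omega> * eps\<^sup>2 \<partial>M))"
    unfolding ind sum_distrib_right
    by (rule Bochner_Integration.integral_sum) (use integrable_real_mult_indicator[OF Ak_sets, of "\<lambda>_. eps\<^sup>2"] in \<open>simp add: mult.commute\<close>)
  also have "\<dots> \<le> (\<Sum>k\<in>{m..n}. (\<integral>\<omega>. indicator (Ak k) \<omega> * (norm (W m n \<omega>))\<^sup>2 \<partial>M))"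
    by (rule sum_mono) (rule key)
  also have "\<dots> = (\<integral>\<omega>. indicator A \<omega> * (norm (W m n \<omega>))\<^sup>2 \<partial>M)"
    unfolding ind sum_distrib_right
    by (rule Bochner_Integration.integral_sum[symmetric]) (use integrable_real_mult_indicator[OF Ak_sets iWn] in \<open>simp add: mult.commute\<close>)
  also have "\<dots> \<le> (\<integral>\<omega>. (norm (W m n \<omega>))\<^sup>2 \<partial>M)"
    using integrable_real_mult_indicator[OF A_sets iWn] iWn
    by (intro integral_mono) (auto simp: indicator_def mult.commute)
  also have "\<dots> \<le> (\<Sum>i\<in>{m..<n}. (\<gamma> i)\<^sup>2 * (2 * C))" using W2[OF m, of n] unfolding W_def by simp
  finally have "eps\<^sup>2 * P.prob A \<le> (\<Sum>i\<in>{m..<n}. (\<gamma> i)\<^sup>2 * (2 * C))" .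
  hence "P.prob A \<le> (\<Sum>i\<in>{m..<n}. (\<gamma> i)\<^sup>2 * (2 * C)) / eps\<^sup>2"
    using eps by (simp add: field_simps)
  thus ?thesis unfolding A_def W_def .
qed

end

context sgdset begin

definition T :: "nat \<Rightarrow> real" where "T m = (\<Sum>i. (\<gamma> (i + m))\<^sup>2) * (2 * C)"

lemma T_lim: "T \<longlonglongrightarrow> 0"
proof -
  have e: "(\<Sum>i. (\<gamma> (i + m))\<^sup>2) = (\<Sum>i. (\<gamma> i)\<^sup>2) - (\<Sum>i<m. (\<gamma> i)\<^sup>2)" for m
    by (rule suminf_minus_initial_segment[OF \<gamma>_sq])
  have "(\<lambda>m. (\<Sum>i. (\<gamma> i)\<^sup>2) - (\<Sum>i<m. (\<gamma> i)\<^sup>2)) \<longlonglongrightarrow> (\<Sum>i. (\<gamma> i)\<^sup>2) - (\<Sum>i. (\<gamma> i)\<^sup>2)"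
    by (intro tendsto_diff tendsto_const summable_LIMSEQ[OF \<gamma>_sq])
  hence "(\<lambda>m. (\<Sum>i. (\<gamma> (i + m))\<^sup>2)) \<longlonglongrightarrow> 0" unfolding e by simp
  hence "(\<lambda>m. (\<Sum>i. (\<gamma> (i + m))\<^sup>2) * (2 * C)) \<longlonglongrightarrow> 0 * (2 * C)" by (intro tendsto_mult tendsto_const)
  thus ?thesis unfolding T_def by simp
qed

lemma tail_bound:
  assumes m: "m \<ge> n1" and eps: "eps > 0"
  shows "P.prob {\<omega>\<in>space M. \<exists>k\<ge>m. eps \<le> norm (Ws m k (Xs \<omega>))} \<le> T m / eps\<^sup>2"
proof -
  define B where "B n = {\<omega>\<in>space M. \<exists>k\<in>{m..m+n}. eps \<le> norm (Ws m k (Xs \<omega>))}" for n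
  have [measurable]: "(\<lambda>\<omega>. Ws a b (Xs \<omega>)) \<in> borel_measurable M" for a b by (rule Wo_meas)
  have Bs: "range B \<subseteq> sets M" unfolding B_def by auto
  have Binc: "incseq B" unfolding incseq_def B_def by force
  have BU: "(\<Union>n. B n) = {\<omega>\<in>space M. \<exists>k\<ge>m. eps \<le> norm (Ws m k (Xs \<omega>))}"
  proof safe
    fix \<omega> k assume "\<omega> \<in> space M" "m \<le> k" "eps \<le> norm (Ws m k (Xs \<omega>))"
    thus "\<omega> \<in> (\<Union>n. B n)" unfolding B_def by (intro UN_I[of "k - m"]) auto
  qed (auto simp: B_def)
  have lim: "(\<lambda>n. P.prob (B n)) \<longlonglongrightarrow> P.prob (\<Union>n. B n)"
    by (rule P.finite_Lim_measure_incseq[OF Bs Binc])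
  have bnd: "P.prob (B n) \<le> T m / eps\<^sup>2" for n
  proof -
    have "P.prob (B n) \<le> (\<Sum>i\<in>{m..<m+n}. (\<gamma> i)\<^sup>2 * (2 * C)) / eps\<^sup>2"
      unfolding B_def by (rule kolmo[OF m _ eps]) simp
    also have "(\<Sum>i\<in>{m..<m+n}. (\<gamma> i)\<^sup>2 * (2 * C)) = (\<Sum>i\<in>{..<n}. (\<gamma> (i + m))\<^sup>2) * (2 * C)"
    proof -
      have "(\<Sum>i\<in>{m..<m+n}. (\<gamma> i)\<^sup>2) = (\<Sum>i\<in>{0..<n}. (\<gamma> (i + m))\<^sup>2)"
        using sum.shift_bounds_nat_ivl[of "\<lambda>i. (\<gamma> i)\<^sup>2" 0 m n] by (simp add: add.commute)
      moreover have "(\<Sum>i\<in>{m..<m+n}. (\<gamma> i)\<^sup>2 * (2 * C)) = (\<Sum>i\<in>{m..<m+n}. (\<gamma> i)\<^sup>2) * (2 * C)"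
        by (rule sum_distrib_right[symmetric])
      ultimately show ?thesis by (simp add: atLeast0LessThan)
    qed
    also have "\<dots> \<le> T m" unfolding T_def
      using C_pos summable_iff_shift[of "\<lambda>i. (\<gamma> i)\<^sup>2" m] \<gamma>_sq by (intro mult_right_mono sum_le_suminf) auto
    finally show ?thesis using eps by (simp add: divide_right_mono)
  qed
  have "P.prob (\<Union>n. B n) \<le> T m / eps\<^sup>2"
    by (rule LIMSEQ_le_const2[OF lim]) (use bnd in auto)
  thus ?thesis unfolding BU .
qed

lemma cauchy_q: "AE \<omega> in M. \<exists>m\<ge>n1. \<forall>k\<ge>m. norm (Ws m k (Xs \<omega>)) < 1 / real (Suc q)"
proof -
  define eps where "eps = 1 / real (Suc q)"
  have eps: "eps > 0" unfolding eps_def by simp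
  have [measurable]: "(\<lambda>\<omega>. Ws a b (Xs \<omega>)) \<in> borel_measurable M" for a b by (rule Wo_meas)
  define Bad where "Bad = {\<omega>\<in>space M. \<forall>m\<ge>n1. \<exists>k\<ge>m. eps \<le> norm (Ws m k (Xs \<omega>))}"
  have Bs: "Bad \<in> sets M" unfolding Bad_def by measurable
  have le: "P.prob Bad \<le> T m / eps\<^sup>2" if m: "m \<ge> n1" for m
  proof -
    have "Bad \<subseteq> {\<omega>\<in>space M. \<exists>k\<ge>m. eps \<le> norm (Ws m k (Xs \<omega>))}" unfolding Bad_def using m by auto
    hence "P.prob Bad \<le> P.prob {\<omega>\<in>space M. \<exists>k\<ge>m. eps \<le> norm (Ws m k (Xs \<omega>))}"
      by (intro P.finite_measure_mono) measurable
    also have "\<dots> \<le> T m / eps\<^sup>2" by (rule tail_bound[OF m eps])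
    finally show ?thesis .
  qed
  have "(\<lambda>m. T m / eps\<^sup>2) \<longlonglongrightarrow> 0 / eps\<^sup>2" by (intro tendsto_divide T_lim tendsto_const) (use eps in simp)
  hence "P.prob Bad \<le> 0" by (intro LIMSEQ_le_const[of "\<lambda>m. T m / eps\<^sup>2"]) (use le in auto)
  hence "P.prob Bad = 0" by (simp add: measure_nonneg antisym)
  hence null: "Bad \<in> null_sets M" using Bs by (simp add: P.emeasure_eq_measure null_sets_def)
  show ?thesis
    by (rule AE_I'[OF null]) (auto simp: Bad_def eps_def not_less)
qed

lemma W_cauchy_AE: "AE \<omega> in M. Cauchy (\<lambda>k. Ws n1 k (Xs \<omega>))"
proof -
  have "AE \<omega> in M. \<forall>q. \<exists>m\<ge>n1. \<forall>k\<ge>m. norm (Ws m k (Xs \<omega>)) < 1 / real (Suc q)"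
    by (subst AE_all_countable) (intro allI cauchy_q)
  thus ?thesis
  proof (rule AE_mp[OF _ AE_I2[OF impI]])
    fix \<omega> assume h: "\<forall>q. \<exists>m\<ge>n1. \<forall>k\<ge>m. norm (Ws m k (Xs \<omega>)) < 1 / real (Suc q)"
    show "Cauchy (\<lambda>k. Ws n1 k (Xs \<omega>))"
    proof (rule CauchyI)
      fix e :: real assume e: "e > 0"
      obtain q where q: "1 / real (Suc q) < e / 2"
        using reals_Archimedean[of "e/2"] e by (auto simp: inverse_eq_divide)
      obtain m where m: "m \<ge> n1" "\<And>k. k \<ge> m \<Longrightarrow> norm (Ws m k (Xs \<omega>)) < 1 / real (Suc q)"
        using h by blast
      show "\<exists>M. \<forall>a\<ge>M. \<forall>b\<ge>M. norm (Ws n1 a (Xs \<omega>) - Ws n1 b (Xs \<omega>)) < e"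
      proof (intro exI allI impI)
        fix a b assume a: "a \<ge> m" and b: "b \<ge> m"
        have "Ws n1 a (Xs \<omega>) - Ws n1 b (Xs \<omega>) = Ws m a (Xs \<omega>) - Ws m b (Xs \<omega>)"
          using Ws_split[OF m(1) a] Ws_split[OF m(1) b] by simp
        also have "norm \<dots> \<le> norm (Ws m a (Xs \<omega>)) + norm (Ws m b (Xs \<omega>))" by (rule norm_triangle_ineq4)
        finally show "norm (Ws n1 a (Xs \<omega>) - Ws n1 b (Xs \<omega>)) < e" using m(2)[OF a] m(2)[OF b] q by simp
      qed
    qed
  qed
qed

lemma final: "AE \<omega> in M. (\<lambda>n. norm (sgd \<gamma> gradV (\<lambda>i. X i \<omega>) n - fK)) \<longlonglongrightarrow> 0"
  using W_cauchy_AE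
proof (rule AE_mp[OF _ AE_I2[OF impI]])
  fix \<omega> assume w: "\<omega> \<in> space M" and ca: "Cauchy (\<lambda>k. Ws n1 k (Xs \<omega>))"
  have Xsp: "X i \<omega> \<in> space \<rho>" for i using measurable_space[OF X_meas w] .
  define v where "v n = sgd \<gamma> gradV (Xs \<omega>) n" for n
  define W where "W n = Ws n1 n (Xs \<omega>)" for n
  obtain Wl where Wl: "W \<longlonglongrightarrow> Wl"
    using Cauchy_convergent[OF ca] unfolding W_def convergent_def by blast
  have "v \<longlonglongrightarrow> fK"
  proof (rule det_conv[where Gf = G and g = \<gamma> and nst = n1 and Gb = "sqrt (2 * C)", OF _ _ Wl])
    fix n assume n: "n \<ge> n1"
    have "W (Suc n) - W n = xi n (Xs \<omega>)" unfolding W_def using Ws_Suc[OF n] by simp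
    thus "v (Suc n) = v n - \<gamma> n *\<^sub>R G (v n) - (W (Suc n) - W n)"
      unfolding v_def xi_def by (simp add: scaleR_diff_right)
    have "(norm (G (v n)))\<^sup>2 \<le> 2 * C" unfolding v_def by (rule moments(3)[OF n]) (simp add: Xsp)
    thus "norm (G (v n)) \<le> sqrt (2 * C)" by (rule real_le_rsqrt)
  qed (auto simp: \<gamma>_pos gamma_lim \<gamma>_sum coercive)
  thus "(\<lambda>n. norm (sgd \<gamma> gradV (\<lambda>i. X i \<omega>) n - fK)) \<longlonglongrightarrow> 0"
    unfolding v_def by (intro tendsto_norm_zero LIM_zero)
qed

end

theorem mainTheorem2:
  fixes \<rho> :: "'z measure" and M :: "'w measure"
    and X :: "nat \<Rightarrow> 'w \<Rightarrow> 'z"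
    and V :: "'a::euclidean_space \<Rightarrow> 'z \<Rightarrow> real"
    and gradV :: "'a \<Rightarrow> 'z \<Rightarrow> 'a"
    and HV :: "'a \<Rightarrow> 'z \<Rightarrow> 'a \<Rightarrow> 'a"
    and Mb :: real and K :: "'a set" and fK :: 'a
    and \<gamma> :: "nat \<Rightarrow> real" and C :: real and N :: nat
  assumes rho: "prob_space \<rho>"
    and M: "prob_space M"
    and X_meas: "\<And>i. X i \<in> measurable M \<rho>"
    and X_distr: "\<And>i. distr M \<rho> (X i) = \<rho>"
    and X_indep: "prob_space.indep_vars M (\<lambda>_. \<rho>) X UNIV"
    and V_nonneg: "\<And>f z. z \<in> space \<rho> \<Longrightarrow> V f z \<ge> 0"
    and V_convex: "\<And>z. z \<in> space \<rho> \<Longrightarrow> convex_on UNIV (\<lambda>f. V f z)"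
    and V_grad: "\<And>f z. z \<in> space \<rho> \<Longrightarrow>
                   ((\<lambda>g. V g z) has_derivative (\<lambda>h. gradV f z \<bullet> h)) (at f)"
    and V_hess: "\<And>f z. z \<in> space \<rho> \<Longrightarrow>
                   ((\<lambda>g. gradV g z) has_derivative HV f z) (at f)"
    and I_finite: "\<And>f. integrable \<rho> (\<lambda>z. V f z)"
    and H_psd: "\<And>f g z. z \<in> space \<rho> \<Longrightarrow> g \<bullet> HV f z g \<ge> 0"
    and H_bound: "\<And>f z. z \<in> space \<rho> \<Longrightarrow> onorm (HV f z) \<le> Mb"
    and K: "closed K" "convex K"
    and fK_in: "fK \<in> K"
    and fK_crit: "(risk \<rho> V has_derivative (\<lambda>h. 0 \<bullet> h)) (at fK)"
    and fK_unique: "\<And>f. f \<noteq> fK \<Longrightarrow>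
          \<exists>g. (risk \<rho> V has_derivative (\<lambda>h. g \<bullet> h)) (at f) \<and> (f - fK) \<bullet> g > 0"
    and \<gamma>_pos: "\<And>n. \<gamma> n > 0"
    and \<gamma>_sum: "\<not> summable \<gamma>"
    and \<gamma>_sq: "summable (\<lambda>n. (\<gamma> n)\<^sup>2)"
    and C_pos: "C > 0" and N_pos: "N > 0"
    and stab: "\<And>n zs. n > N \<Longrightarrow> (\<forall>i. zs i \<in> space \<rho>) \<Longrightarrow>
          0 < (\<integral>z. V (sgd \<gamma> gradV zs n) z - V (sgd \<gamma> gradV zs n - \<gamma> n *\<^sub>R gradV (sgd \<gamma> gradV zs n) z) z \<partial>\<rho>)
          \<and> (\<integral>z. V (sgd \<gamma> gradV zs n) z - V (sgd \<gamma> gradV zs n - \<gamma> n *\<^sub>R gradV (sgd \<gamma> gradV zs n) z) z \<partial>\<rho>) \<le> C * \<gamma> n"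
  shows "AE \<omega> in M. (\<lambda>n. norm (sgd \<gamma> gradV (\<lambda>i. X i \<omega>) n - fK)) \<longlonglongrightarrow> 0"
proof -
  interpret sgdset \<rho> M X V gradV HV Mb K fK \<gamma> C N
    unfolding sgdset_def using rho M X_meas X_distr X_indep V_nonneg V_grad V_hess I_finite H_psd H_bound
        fK_crit fK_unique \<gamma>_pos \<gamma>_sum \<gamma>_sq C_pos stab by blast
  show ?thesis by (rule final)
qed

end
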